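(* Let $V$ be any vector space over a field $\mathbf{k}$ of characteristic zero. The assignment sending a twisted Poisson structure $\{\,,\}$ on $TV$ to the map $r\in\operatorname{End}(V\otimes V)$, $r(v\otimes w):=\{v,w\}$ for $v,w\in V$, is a bijection between twisted Poisson structures on $TV$ and elements $r\in\operatorname{End}(V\otimes V)$ that are skew, $r=-r^{21}$, and satisfy the classical Yang–Baxter equation $$[r^{12},r^{13}]-[r^{23},r^{12}]+[r^{13},r^{23}]=0\quad\text{in }\operatorname{End}(V^{\otimes 3}).$$
   Context: $TV=\bigoplus_{m\ge0}V^{\otimes m}$ is the tensor algebra with multiplication $\otimes$; for $x\in V^{\otimes m}$ write $|x|=m$, and $S_m$ acts on $V^{\otimes m}$ by permuting tensor factors. Block permutations: for $a,b,c\ge0$, $(21)^{a,b}$ is the linear map of $V^{\otimes(a+b)}$ with $x\otimes y\mapsto y\otimes x$ ($x\in V^{\otimes a},y\in V^{\otimes b}$); $(231)^{a,b,c}$, $(312)^{a,b,c}$, $(213)^{a,b,c}$ are the linear maps of $V^{\otimes(a+b+c)}$ with $x\otimes y\otimes z\mapsto z\otimes x\otimes y$, $x\otimes y\otimes z\mapsto y\otimes z\otimes x$, $x\otimes y\otimes z\mapsto y\otimes x\otimes z$ respectively ($x\in V^{\otimes a},y\in V^{\otimes b},z\in V^{\otimes c}$). A twisted Poisson structure on $TV$ is a bilinear map $\{\,,\}:TV\otimes TV\to TV$ with $\{V^{\otimes m},V^{\otimes n}\}\subset V^{\otimes(m+n)}$ such that for all homogeneous $u,v,w$: (skew-symmetry)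 $\{w,v\}=-(21)^{|v|,|w|}\{v,w\}$; (Jacobi) $\{u,\{v,w\}\}+(231)^{|v|,|w|,|u|}\{v,\{w,u\}\}+(312)^{|w|,|u|,|v|}\{w,\{u,v\}\}=0$; (Leibniz) $\{u\otimes v,w\}=u\otimes\{v,w\}+(213)^{|v|,|u|,|w|}(v\otimes\{u,w\})$. For $r\in\operatorname{End}(V\otimes V)$, $r^{ij}\in\operatorname{End}(V^{\otimes 3})$ denotes $r$ acting on the $i$-th and $j$-th tensor factors, and $r^{21}=PrP$ where $P(v\otimes w)=w\otimes v$. *)

theory Defs
  imports Main "HOL-Library.Poly_Mapping"
begin

text \<open>V is the k-vector space with basis indexed by the type 'b
(every vector space has a basis). Then V^{\<otimes>m} has basis the words of
length m over 'b, and TV is the space of finitely supported functions on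
words: type tv below.\<close>

type_synonym ('b, 'k) tv = "'b list \<Rightarrow>\<^sub>0 'k"

definition smult :: "'k::field \<Rightarrow> ('b, 'k) tv \<Rightarrow> ('b, 'k) tv" where
  "smult c p = Poly_Mapping.map (\<lambda>x. c * x) p"

definition tensor :: "('b, 'k::field) tv \<Rightarrow> ('b, 'k) tv \<Rightarrow> ('b, 'k) tv" where
  "tensor p q = (\<Sum>u\<in>Poly_Mapping.keys p. \<Sum>v\<in>Poly_Mapping.keys q. Poly_Mapping.single (u @ v) (Poly_Mapping.lookup p u * Poly_Mapping.lookup q v))"

definition homog :: "nat \<Rightarrow> ('b, 'k::field) tv \<Rightarrow> bool" where
  "homog m p \<longleftrightarrow> (\<forall>w\<in>Poly_Mapping.keys p. length w = m)"

definition proj :: "nat \<Rightarrow> ('b, 'k::field) tv \<Rightarrow> ('b, 'k) tv" where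
  "proj m p = (\<Sum>w\<in>{w\<in>Poly_Mapping.keys p. length w = m}. Poly_Mapping.single w (Poly_Mapping.lookup p w))"

text \<open>Block permutations: given on basis words; the value at an output word w
is the coefficient of its preimage. They act as the identity on words of
other lengths (irrelevant: they are only applied in the right degree).\<close>

definition key21 :: "nat \<Rightarrow> nat \<Rightarrow> 'b list \<Rightarrow> 'b list" where
  "key21 a b w = (if length w = a + b then drop b w @ take b w else w)"

definition key231 :: "nat \<Rightarrow> nat \<Rightarrow> nat \<Rightarrow> 'b list \<Rightarrow> 'b list" where
  "key231 a b c w = (if length w = a + b + c
     then take a (drop c w) @ drop (c + a) w @ take c w else w)"

definition key312 :: "nat \<Rightarrow> nat \<Rightarrow> nat \<Rightarrow> 'b list \<Rightarrow> 'b list" where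
  "key312 a b c w = (if length w = a + b + c
     then drop (b + c) w @ take b w @ take c (drop b w) else w)"

definition key213 :: "nat \<Rightarrow> nat \<Rightarrow> nat \<Rightarrow> 'b list \<Rightarrow> 'b list" where
  "key213 a b c w = (if length w = a + b + c
     then take a (drop b w) @ take b w @ drop (b + a) w else w)"

text \<open>(21)^{a,b}: x \<otimes> y \<mapsto> y \<otimes> x\<close>
definition perm21 :: "nat \<Rightarrow> nat \<Rightarrow> ('b, 'k::field) tv \<Rightarrow> ('b, 'k) tv" where
  "perm21 a b p = Poly_Mapping.map_key (key21 a b) p"

text \<open>(231)^{a,b,c}: x \<otimes> y \<otimes> z \<mapsto> z \<otimes> x \<otimes> y\<close>
definition perm231 :: "nat \<Rightarrow> nat \<Rightarrow> nat \<Rightarrow> ('b, 'k::field) tv \<Rightarrow> ('b, 'k) tv" where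
  "perm231 a b c p = Poly_Mapping.map_key (key231 a b c) p"

text \<open>(312)^{a,b,c}: x \<otimes> y \<otimes> z \<mapsto> y \<otimes> z \<otimes> x\<close>
definition perm312 :: "nat \<Rightarrow> nat \<Rightarrow> nat \<Rightarrow> ('b, 'k::field) tv \<Rightarrow> ('b, 'k) tv" where
  "perm312 a b c p = Poly_Mapping.map_key (key312 a b c) p"

text \<open>(213)^{a,b,c}: x \<otimes> y \<otimes> z \<mapsto> y \<otimes> x \<otimes> z\<close>
definition perm213 :: "nat \<Rightarrow> nat \<Rightarrow> nat \<Rightarrow> ('b, 'k::field) tv \<Rightarrow> ('b, 'k) tv" where
  "perm213 a b c p = Poly_Mapping.map_key (key213 a b c) p"

definition twisted_poisson :: "(('b, 'k::field) tv \<Rightarrow> ('b, 'k) tv \<Rightarrow> ('b, 'k) tv) \<Rightarrow> bool" where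
  "twisted_poisson br \<longleftrightarrow>
     \<comment> \<open>bilinear\<close>
     (\<forall>p q s. br (p + q) s = br p s + br q s) \<and>
     (\<forall>p q s. br s (p + q) = br s p + br s q) \<and>
     (\<forall>c p q. br (smult c p) q = smult c (br p q)) \<and>
     (\<forall>c p q. br p (smult c q) = smult c (br p q)) \<and>
     \<comment> \<open>graded: {V^m, V^n} \<subseteq> V^(m+n)\<close>
     (\<forall>m n p q. homog m p \<longrightarrow> homog n q \<longrightarrow> homog (m + n) (br p q)) \<and>
     \<comment> \<open>skew-symmetry\<close>
     (\<forall>m n v w. homog m v \<longrightarrow> homog n w \<longrightarrow> br w v = - perm21 m n (br v w)) \<and>
     \<comment> \<open>Jacobi, |u| = l, |v| = m, |w| = n\<close>
     (\<forall>l m n u v w. homog l u \<longrightarrow> homog m v \<longrightarrow> homog n w \<longrightarrow>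
        br u (br v w) + perm231 m n l (br v (br w u)) + perm312 n l m (br w (br u v)) = 0) \<and>
     \<comment> \<open>Leibniz, |u| = l, |v| = m, |w| = n\<close>
     (\<forall>l m n u v w. homog l u \<longrightarrow> homog m v \<longrightarrow> homog n w \<longrightarrow>
        br (tensor u v) w = tensor u (br v w) + perm213 m l n (tensor v (br u w)))"

text \<open>End(V \<otimes> V), with V \<otimes> V = V^{\<otimes>2} \<subseteq> TV: linear maps of TV that
factor through the projection to V^{\<otimes>2} and take values in V^{\<otimes>2}
(these correspond bijectively to linear endomorphisms of V \<otimes> V).\<close>
definition EndVV :: "(('b, 'k::field) tv \<Rightarrow> ('b, 'k) tv) set" where
  "EndVV = {R. (\<forall>p q. R (p + q) = R p + R q) \<and> (\<forall>c p. R (smult c p) = smult c (R p)) \<and>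
               (\<forall>p. R p = R (proj 2 p)) \<and> (\<forall>p. homog 2 (R p))}"

definition flipP :: "('b, 'k::field) tv \<Rightarrow> ('b, 'k) tv" where
  "flipP = perm21 1 1"

definition r21 :: "(('b, 'k::field) tv \<Rightarrow> ('b, 'k) tv) \<Rightarrow> ('b, 'k) tv \<Rightarrow> ('b, 'k) tv" where
  "r21 R p = flipP (R (flipP p))"

definition skew_r :: "(('b, 'k::field) tv \<Rightarrow> ('b, 'k) tv) \<Rightarrow> bool" where
  "skew_r R \<longleftrightarrow> R = (\<lambda>p. - r21 R p)"

definition r12 :: "(('b, 'k::field) tv \<Rightarrow> ('b, 'k) tv) \<Rightarrow> ('b, 'k) tv \<Rightarrow> ('b, 'k) tv" where
  "r12 R x = (\<Sum>w\<in>{w\<in>Poly_Mapping.keys x. length w = 3}.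
      smult (Poly_Mapping.lookup x w) (tensor (R (Poly_Mapping.single [w!0, w!1] 1)) (Poly_Mapping.single [w!2] 1)))"

definition r23 :: "(('b, 'k::field) tv \<Rightarrow> ('b, 'k) tv) \<Rightarrow> ('b, 'k) tv \<Rightarrow> ('b, 'k) tv" where
  "r23 R x = (\<Sum>w\<in>{w\<in>Poly_Mapping.keys x. length w = 3}.
      smult (Poly_Mapping.lookup x w) (tensor (Poly_Mapping.single [w!0] 1) (R (Poly_Mapping.single [w!1, w!2] 1))))"

definition key_swap23 :: "'b list \<Rightarrow> 'b list" where
  "key_swap23 w = (if length w = 3 then [w!0, w!2, w!1] else w)"

definition P23 :: "('b, 'k::field) tv \<Rightarrow> ('b, 'k) tv" where
  "P23 p = Poly_Mapping.map_key key_swap23 p"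

definition r13 :: "(('b, 'k::field) tv \<Rightarrow> ('b, 'k) tv) \<Rightarrow> ('b, 'k) tv \<Rightarrow> ('b, 'k) tv" where
  "r13 R x = P23 (r12 R (P23 x))"

definition commut :: "(('b, 'k::field) tv \<Rightarrow> ('b, 'k) tv) \<Rightarrow> (('b, 'k) tv \<Rightarrow> ('b, 'k) tv)
                      \<Rightarrow> ('b, 'k) tv \<Rightarrow> ('b, 'k) tv" where
  "commut A B x = A (B x) - B (A x)"

definition CYBE :: "(('b, 'k::field) tv \<Rightarrow> ('b, 'k) tv) \<Rightarrow> bool" where
  "CYBE R \<longleftrightarrow> (\<forall>x. homog 3 x \<longrightarrow>
     commut (r12 R) (r13 R) x - commut (r23 R) (r12 R) x + commut (r13 R) (r23 R) x = 0)"

definition assoc_r :: "(('b, 'k::field) tv \<Rightarrow> ('b, 'k) tv \<Rightarrow> ('b, 'k) tv) \<Rightarrow> ('b, 'k) tv \<Rightarrow> ('b, 'k) tv" where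
  "assoc_r br p = (\<Sum>w\<in>{w\<in>Poly_Mapping.keys p. length w = 2}.
      smult (Poly_Mapping.lookup p w) (br (Poly_Mapping.single [w!0] 1) (Poly_Mapping.single [w!1] 1)))"

end

theory Submission
  imports Defs
begin

abbreviation lk where "lk \<equiv> Poly_Mapping.lookup"
abbreviation sg where "sg \<equiv> Poly_Mapping.single"
abbreviation ks where "ks \<equiv> Poly_Mapping.keys"

lemma lookup_smult[simp]: "lk (smult c p) w = c * lk p w"
  by (simp add: smult_def Poly_Mapping.map.rep_eq when_def)

lemma smult_add[simp]: "smult c (p + q) = smult c p + smult c q"
  by (rule poly_mapping_eqI) (simp add: lookup_add algebra_simps)
lemma smult_add2: "smult (a + b) p = smult a p + smult b p"
  by (rule poly_mapping_eqI) (simp add: lookup_add algebra_simps)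
lemma smult_zero[simp]: "smult c 0 = 0" "smult 0 p = 0"
  by (rule poly_mapping_eqI, simp)+
lemma smult_one[simp]: "smult 1 p = p"
  by (rule poly_mapping_eqI, simp)
lemma smult_smult[simp]: "smult a (smult b p) = smult (a*b) p"
  by (rule poly_mapping_eqI, simp)
lemma smult_neg[simp]: "smult c (- p) = - smult c p"
  by (rule poly_mapping_eqI, simp)
lemma smult_diff[simp]: "smult c (p - q) = smult c p - smult c q"
  by (rule poly_mapping_eqI, simp add: lookup_minus algebra_simps)
lemma smult_single[simp]: "smult c (sg w d) = sg w (c * d)"
  by (rule poly_mapping_eqI) (simp add: lookup_single when_def)
lemma smult_sum: "smult c (sum f I) = (\<Sum>i\<in>I. smult c (f i))"
  by (rule poly_mapping_eqI) (simp add: lookup_sum sum_distrib_left)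

definition lin :: "('b list \<Rightarrow> ('c, 'k::field) tv) \<Rightarrow> ('b, 'k) tv \<Rightarrow> ('c, 'k) tv" where
  "lin F p = (\<Sum>w\<in>ks p. smult (lk p w) (F w))"

lemma lin_superset:
  assumes "finite S" "ks p \<subseteq> S"
  shows "lin F p = (\<Sum>w\<in>S. smult (lk p w) (F w))"
  unfolding lin_def
  by (rule sum.mono_neutral_left) (use assms in \<open>auto simp: in_keys_iff\<close>)

lemma lin_add[simp]: "lin F (p + q) = lin F p + lin F q"
proof -
  have "lin F (p+q) = (\<Sum>w\<in>ks p \<union> ks q. smult (lk (p+q) w) (F w))"
    by (rule lin_superset) (auto simp: keys_add)
  also have "\<dots> = (\<Sum>w\<in>ks p \<union> ks q. smult (lk p w) (F w)) + (\<Sum>w\<in>ks p \<union> ks q. smult (lk q w) (F w))"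
    by (simp add: lookup_add smult_add2 sum.distrib)
  also have "\<dots> = lin F p + lin F q"
    by (simp add: lin_superset[symmetric])
  finally show ?thesis .
qed

lemma lin_zero[simp]: "lin F 0 = 0"
  by (simp add: lin_def)

lemma lin_single[simp]: "lin F (sg w c) = smult c (F w)"
  by (simp add: lin_def)

lemma lin_smult[simp]: "lin F (smult c p) = smult c (lin F p)"
proof -
  have "lin F (smult c p) = (\<Sum>w\<in>ks p. smult (lk (smult c p) w) (F w))"
    by (rule lin_superset) (auto simp: in_keys_iff)
  thus ?thesis by (simp add: lin_def smult_sum)
qed

lemma lin_neg[simp]: "lin F (- p) = - lin F p"
proof -
  have "lin F (p + - p) = lin F p + lin F (- p)" by (rule lin_add)
  thus ?thesis by (simp add: eq_neg_iff_add_eq_0 add.commute)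
qed

lemma lin_diff[simp]: "lin F (p - q) = lin F p - lin F q"
  by (metis diff_conv_add_uminus lin_add lin_neg)

lemma lin_sum: "lin F (sum f I) = (\<Sum>i\<in>I. lin F (f i))"
  by (induction I rule: infinite_finite_induct) auto

lemma lin_fun_add: "lin (\<lambda>w. F w + G w) p = lin F p + lin G p"
  by (simp add: lin_def sum.distrib)
lemma lin_fun_zero[simp]: "lin (\<lambda>w. 0) p = 0"
  by (simp add: lin_def)
lemma lin_fun_neg: "lin (\<lambda>w. - F w) p = - lin F p"
  by (simp add: lin_def sum_negf)
lemma lin_fun_diff: "lin (\<lambda>w. F w - G w) p = lin F p - lin G p"
  by (simp add: lin_def sum_subtractf)
lemma lin_fun_sum: "lin (\<lambda>w. \<Sum>i\<in>I. F i w) p = (\<Sum>i\<in>I. lin (F i) p)"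
  by (simp add: lin_def smult_sum sum.swap[of _ I])
lemma lin_fun_smult: "lin (\<lambda>w. smult c (F w)) p = smult c (lin F p)"
  by (simp add: lin_def smult_sum mult.commute)

lemma lin_cong: "(\<And>w. w \<in> ks p \<Longrightarrow> F w = G w) \<Longrightarrow> lin F p = lin G p"
  by (simp add: lin_def)

lemma lin_swap: "lin (\<lambda>w. lin (\<lambda>v. F w v) q) p = lin (\<lambda>v. lin (\<lambda>w. F w v) p) q"
  by (simp add: lin_def smult_sum sum.swap[of _ "ks p"] mult.commute)

definition linear_tv :: "(('b, 'k::field) tv \<Rightarrow> ('c, 'k) tv) \<Rightarrow> bool" where
  "linear_tv h \<longleftrightarrow> (\<forall>p q. h (p + q) = h p + h q) \<and> (\<forall>c p. h (smult c p) = smult c (h p))"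

lemma linear_tv_zero: "linear_tv h \<Longrightarrow> h 0 = 0"
proof -
  assume "linear_tv h"
  then have "h (0 + 0) = h 0 + h 0" unfolding linear_tv_def by blast
  thus ?thesis by simp
qed

lemma linear_tv_sum: "linear_tv h \<Longrightarrow> h (sum f I) = (\<Sum>i\<in>I. h (f i))"
  by (induction I rule: infinite_finite_induct) (auto simp: linear_tv_zero linear_tv_def)

lemma linear_tv_lin: "linear_tv h \<Longrightarrow> h (lin F p) = lin (\<lambda>w. h (F w)) p"
  unfolding lin_def by (simp add: linear_tv_sum) (simp add: linear_tv_def)

lemma linear_tv_neg: "linear_tv h \<Longrightarrow> h (- p) = - h p"
proof -
  assume a: "linear_tv h"
  then have "h (p + - p) = h p + h (- p)" unfolding linear_tv_def by blast
  thus ?thesis using linear_tv_zero[OF a] by (simp add: eq_neg_iff_add_eq_0 add.commute)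
qed

lemma linear_tv_diff: "linear_tv h \<Longrightarrow> h (p - q) = h p - h q"
proof -
  assume a: "linear_tv h"
  have "h (p + - q) = h p + h (- q)" using a unfolding linear_tv_def by blast
  thus ?thesis using linear_tv_neg[OF a] by simp
qed

lemma linear_tv_lin_self: "linear_tv (lin F)"
  by (simp add: linear_tv_def)

lemma lin_single_id: "lin (\<lambda>w. sg w 1) p = p"
  by (rule poly_mapping_eqI) (simp add: lin_def lookup_sum lookup_single when_def in_keys_iff)

lemma lin_expand: "p = lin (\<lambda>w. sg w 1) p"
  by (simp add: lin_single_id)


section \<open>permutations\<close>

lemma lookup_map_key: "inj f \<Longrightarrow> lk (Poly_Mapping.map_key f p) w = lk p (f w)"
proof -
  assume [transfer_rule]: "inj f"
  show ?thesis by transfer simp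
qed

lemma inj_by_inv: "(\<And>w. g (f w) = w) \<Longrightarrow> inj f"
  by (metis injI)

lemma key21_inv: "key21 b a (key21 a b w) = w"
  by (cases "length w = a + b") (auto simp: key21_def)

lemma take_drop_app: "take a (drop c w) @ drop (c + a) w = drop c w"
  by (metis add.commute append_take_drop_id drop_drop)

lemma key231_alt: "key231 a b c w = (if length w = a + b + c then drop c w @ take c w else w)"
  by (simp add: key231_def take_drop_app)

lemma key312_alt: "key312 a b c w = (if length w = a + b + c then drop (b + c) w @ take (b + c) w else w)"
  by (simp add: key312_def take_add)

lemma inj_rot:
  assumes "c \<le> n"
  shows "inj (\<lambda>w::'a list. if length w = n then drop c w @ take c w else w)"
proof (rule injI)
  fix w1 w2 :: "'a list"
  assume eq: "(if length w1 = n then drop c w1 @ take c w1 else w1) = (if length w2 = n then drop c w2 @ take c w2 else w2)"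
  have l: "length (if length w = n then drop c w @ take c w else w) = length w" for w :: "'a list"
    using assms by auto
  from l[of w1] l[of w2] eq have len: "length w1 = length w2" by metis
  show "w1 = w2"
  proof (cases "length w1 = n")
    case True
    with len eq have "drop c w1 @ take c w1 = drop c w2 @ take c w2" by simp
    moreover have "length (drop c w1) = length (drop c w2)" using len by simp
    ultimately have "drop c w1 = drop c w2" "take c w1 = take c w2" by auto
    then show ?thesis by (metis append_take_drop_id)
  next
    case False
    with len eq show ?thesis by simp
  qed
qed

lemma inj_key21: "inj (key21 a b)"
proof -
  have eq: "key21 a b = (\<lambda>w. if length w = a + b then drop b w @ take b w else w)"
    by (simp add: key21_def fun_eq_iff)
  show ?thesis unfolding eq by (rule inj_rot) simp
qed

lemma inj_key231: "inj (key231 a b c)"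
proof -
  have eq: "key231 a b c = (\<lambda>w. if length w = a + b + c then drop c w @ take c w else w)"
    by (simp add: key231_alt fun_eq_iff)
  show ?thesis unfolding eq by (rule inj_rot) simp
qed

lemma inj_key312: "inj (key312 a b c)"
proof -
  have eq: "key312 a b c = (\<lambda>w. if length w = a + b + c then drop (b+c) w @ take (b+c) w else w)"
    by (simp add: key312_alt fun_eq_iff)
  show ?thesis unfolding eq by (rule inj_rot) simp
qed

lemma split3: "length w = a + b + c \<Longrightarrow> \<exists>x y z. w = x @ y @ z \<and> length x = a \<and> length y = b \<and> length z = c"
  apply (rule exI[of _ "take a w"], rule exI[of _ "take b (drop a w)"], rule exI[of _ "drop (a + b) w"])
  by (simp add: min_def) (metis append.assoc append_take_drop_id drop_drop take_add add.commute)

lemma key213_inv: "key213 b a c (key213 a b c w) = w"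
proof (cases "length w = a + b + c")
  case True
  then obtain y x z where "w = y @ x @ z" "length y = b" "length x = a" "length z = c"
    using split3[of w b a c] by (auto simp: add.commute)
  then show ?thesis by (simp add: key213_def)
qed (simp add: key213_def)

lemma len3: "length w = 3 \<Longrightarrow> w = [w!0, w!1, w!2]"
  by (auto simp: numeral_3_eq_3 length_Suc_conv)

lemma len2: "length w = 2 \<Longrightarrow> w = [w!0, w!1]"
  by (auto simp: numeral_2_eq_2 length_Suc_conv)

lemma swap23_inv: "key_swap23 (key_swap23 w) = w"
proof (cases "length w = 3")
  case True
  then show ?thesis using len3[OF True] by (simp add: key_swap23_def)
qed (simp add: key_swap23_def)

lemma inj_keys: "inj (key21 a b)" "inj (key231 a b c)" "inj (key312 a b c)" "inj (key213 a b c)"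
  "inj key_swap23"
  using inj_key21 inj_key231 inj_key312 inj_by_inv[of "key213 b a c" "key213 a b c", OF key213_inv]
    inj_by_inv[of key_swap23 key_swap23, OF swap23_inv] by blast+

lemma lookup_perms:
  "lk (perm21 a b p) w = lk p (key21 a b w)"
  "lk (perm231 a b c p) w = lk p (key231 a b c w)"
  "lk (perm312 a b c p) w = lk p (key312 a b c w)"
  "lk (perm213 a b c p) w = lk p (key213 a b c w)"
  "lk (P23 p) w = lk p (key_swap23 w)"
  by (simp_all add: perm21_def perm231_def perm312_def perm213_def P23_def lookup_map_key inj_keys)

lemma linear_perms:
  "linear_tv (perm21 a b)" "linear_tv (perm231 a b c)" "linear_tv (perm312 a b c)"
  "linear_tv (perm213 a b c)" "linear_tv P23"
  by (auto simp: linear_tv_def intro!: poly_mapping_eqI simp: lookup_perms lookup_add)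

lemma map_key_single': "inj f \<Longrightarrow> f k = w \<Longrightarrow> Poly_Mapping.map_key f (sg w v) = sg k v"
  by auto

lemma perm21_single: "length x = a \<Longrightarrow> length y = b \<Longrightarrow> perm21 a b (sg (x @ y) c) = sg (y @ x) c"
  unfolding perm21_def by (rule map_key_single') (auto simp: inj_keys key21_def)

lemma perm231_single: "length x = a \<Longrightarrow> length y = b \<Longrightarrow> length z = c \<Longrightarrow>
   perm231 a b c (sg (x @ y @ z) d) = sg (z @ x @ y) d"
  unfolding perm231_def by (rule map_key_single') (auto simp: inj_keys key231_alt)

lemma perm312_single: "length x = a \<Longrightarrow> length y = b \<Longrightarrow> length z = c \<Longrightarrow>
   perm312 a b c (sg (x @ y @ z) d) = sg (y @ z @ x) d"
  unfolding perm312_def by (rule map_key_single') (auto simp: inj_keys key312_alt)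

lemma perm213_single: "length x = a \<Longrightarrow> length y = b \<Longrightarrow> length z = c \<Longrightarrow>
   perm213 a b c (sg (x @ y @ z) d) = sg (y @ x @ z) d"
  unfolding perm213_def by (rule map_key_single') (auto simp: inj_keys key213_def)

lemma P23_single: "P23 (sg [a, b, c] d) = sg [a, c, b] d"
  unfolding P23_def by (rule map_key_single') (auto simp: inj_keys key_swap23_def)

lemma perm21_other: "length w \<noteq> a + b \<Longrightarrow> perm21 a b (sg w c) = sg w c"
  unfolding perm21_def by (rule map_key_single') (auto simp: inj_keys key21_def)

lemma lin_involution:
  assumes inv: "\<And>w. f (f w) = w"
  shows "lin F (Poly_Mapping.map_key f p) = lin (\<lambda>w. F (f w)) p"
proof -
  have injf: "inj f" by (rule inj_by_inv, rule inv)
  have k: "ks (Poly_Mapping.map_key f p) = f ` ks p"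
    using keys_map_key[OF injf] inv by (auto simp: image_def) (metis)
  have "lin F (Poly_Mapping.map_key f p) = (\<Sum>w\<in>f ` ks p. smult (lk p (f w)) (F w))"
    unfolding lin_def k by (simp add: lookup_map_key[OF injf])
  also have "\<dots> = (\<Sum>w\<in>ks p. smult (lk p w) (F (f w)))"
    by (subst sum.reindex) (auto intro: inj_on_subset[OF injf] simp: inv)
  finally show ?thesis by (simp add: lin_def)
qed


section \<open>homogeneity\<close>

lemma homog_zero[simp]: "homog n 0" by (simp add: homog_def)
lemma homog_add: "homog n p \<Longrightarrow> homog n q \<Longrightarrow> homog n (p + q)"
  using keys_add[of p q] unfolding homog_def by blast
lemma homog_smult: "homog n p \<Longrightarrow> homog n (smult c p)"
  unfolding homog_def by (auto simp: in_keys_iff)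
lemma homog_neg: "homog n p \<Longrightarrow> homog n (- p)"
  unfolding homog_def by (auto simp: in_keys_iff)
lemma homog_diff: "homog n p \<Longrightarrow> homog n q \<Longrightarrow> homog n (p - q)"
  unfolding diff_conv_add_uminus by (intro homog_add homog_neg)
lemma homog_sum: "(\<And>i. i \<in> I \<Longrightarrow> homog n (f i)) \<Longrightarrow> homog n (sum f I)"
  by (induction I rule: infinite_finite_induct) (auto intro: homog_add)
lemma homog_single: "length w = n \<Longrightarrow> homog n (sg w c)"
  by (simp add: homog_def)
lemma homog_lin: "(\<And>w. w \<in> ks p \<Longrightarrow> homog n (F w)) \<Longrightarrow> homog n (lin F p)"
  unfolding lin_def by (auto intro!: homog_sum homog_smult)
lemma homog_keys: "homog n p \<Longrightarrow> w \<in> ks p \<Longrightarrow> length w = n"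
  by (simp add: homog_def)

lemma lin_homog2: "homog 2 q \<Longrightarrow> lin F q = lin (\<lambda>v. F [v!0, v!1]) q"
proof (rule lin_cong)
  fix w assume "homog 2 q" "w \<in> ks q"
  then have "w = [w!0, w!1]" using homog_keys len2 by blast
  then show "F w = F [w!0, w!1]" by (rule arg_cong)
qed

lemma lin_homog3: "homog 3 q \<Longrightarrow> lin F q = lin (\<lambda>v. F [v!0, v!1, v!2]) q"
proof (rule lin_cong)
  fix w assume "homog 3 q" "w \<in> ks q"
  then have "w = [w!0, w!1, w!2]" using homog_keys len3 by blast
  then show "F w = F [w!0, w!1, w!2]" by (rule arg_cong)
qed

lemma sum_split_add: "(\<Sum>i<(a::nat)+b. f i) = (\<Sum>i<a. f i) + (\<Sum>i<b. f (a+i))"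
  by (induct b) (simp_all add: add.assoc)

lemma tensor_lin: "tensor p q = lin (\<lambda>x. lin (\<lambda>y. sg (x @ y) 1) q) p"
  by (simp add: tensor_def lin_def smult_sum mult.commute)

lemma tensor_single: "tensor (sg u 1) q = lin (\<lambda>y. sg (u @ y) 1) q"
  by (simp add: tensor_lin)

section \<open>the bracket from r\<close>

definition qR :: "(('b, 'k::field) tv \<Rightarrow> ('b, 'k) tv) \<Rightarrow> 'b \<Rightarrow> 'b \<Rightarrow> ('b, 'k) tv" where
  "qR R a b = R (sg [a, b] 1)"

definition BW :: "(('b, 'k::field) tv \<Rightarrow> ('b, 'k) tv) \<Rightarrow> 'b list \<Rightarrow> 'b list \<Rightarrow> ('b, 'k) tv" where
  "BW R x y = (\<Sum>i<length x. \<Sum>j<length y. lin (\<lambda>v. sg (x[i := v!0] @ y[j := v!1]) 1) (qR R (x!i) (y!j)))"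

definition BB :: "(('b, 'k::field) tv \<Rightarrow> ('b, 'k) tv) \<Rightarrow> ('b, 'k) tv \<Rightarrow> ('b, 'k) tv \<Rightarrow> ('b, 'k) tv" where
  "BB R p q = lin (\<lambda>x. lin (\<lambda>y. BW R x y) q) p"

definition CYx :: "(('b, 'k::field) tv \<Rightarrow> ('b, 'k) tv) \<Rightarrow> ('b, 'k) tv \<Rightarrow> ('b, 'k) tv" where
  "CYx R X = commut (r12 R) (r13 R) X - commut (r23 R) (r12 R) X + commut (r13 R) (r23 R) X"

locale rmat =
  fixes R :: "('b, 'k::field) tv \<Rightarrow> ('b, 'k) tv"
  assumes R_End: "R \<in> EndVV"
begin

lemma R_linear: "linear_tv R"
  using R_End by (simp add: EndVV_def linear_tv_def)

lemma R_homog: "homog 2 (R p)"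
  using R_End by (simp add: EndVV_def)

lemma q_homog: "homog 2 (qR R a b)"
  by (simp add: qR_def R_homog)

lemma BW_homog: "homog (length x + length y) (BW R x y)"
  unfolding BW_def by (auto intro!: homog_sum homog_lin homog_single)

lemma BW_nil1[simp]: "BW R [] y = 0" by (simp add: BW_def)
lemma BW_nil2[simp]: "BW R x [] = 0" by (simp add: BW_def)

lemma BW_single: "BW R [a] [b] = qR R a b"
proof -
  have "BW R [a] [b] = lin (\<lambda>v. sg [v!0, v!1] 1) (qR R a b)"
    by (simp add: BW_def)
  also have "\<dots> = lin (\<lambda>v. sg v 1) (qR R a b)"
    by (rule lin_homog2[symmetric, OF q_homog])
  finally show ?thesis by (simp add: lin_single_id)
qed

lemma BW_leibniz:
  "BW R (u @ v) w = tensor (sg u 1) (BW R v w) + perm213 (length v) (length u) (length w) (tensor (sg v 1) (BW R u w))"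
proof -
  let ?T = "\<lambda>x i j. lin (\<lambda>t. sg (x[i := t!0] @ w[j := t!1]) 1) (qR R (x!i) (w!j))"
  have "BW R (u @ v) w = (\<Sum>i<length u + length v. \<Sum>j<length w. ?T (u@v) i j)"
    by (simp add: BW_def)
  also have "\<dots> = (\<Sum>i<length u. \<Sum>j<length w. ?T (u@v) i j) + (\<Sum>i<length v. \<Sum>j<length w. ?T (u@v) (length u + i) j)"
    by (rule sum_split_add)
  also have "(\<Sum>i<length u. \<Sum>j<length w. ?T (u@v) i j) =
     (\<Sum>i<length u. \<Sum>j<length w. lin (\<lambda>t. sg (u[i := t!0] @ v @ w[j := t!1]) 1) (qR R (u!i) (w!j)))"
    by (rule sum.cong[OF refl], rule sum.cong[OF refl]) (simp add: list_update_append nth_append)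
  also have "\<dots> = perm213 (length v) (length u) (length w) (tensor (sg v 1) (BW R u w))"
    by (simp add: tensor_single BW_def lin_sum linear_tv_sum[OF linear_perms(4)]
       linear_tv_lin[OF linear_perms(4)] linear_tv_lin[OF linear_tv_lin_self] perm213_single)
  also have "(\<Sum>i<length v. \<Sum>j<length w. ?T (u@v) (length u + i) j) =
     (\<Sum>i<length v. \<Sum>j<length w. lin (\<lambda>t. sg (u @ v[i := t!0] @ w[j := t!1]) 1) (qR R (v!i) (w!j)))"
    by (rule sum.cong[OF refl], rule sum.cong[OF refl]) (simp add: list_update_append nth_append)
  also have "\<dots> = tensor (sg u 1) (BW R v w)"
    by (simp add: tensor_single BW_def lin_sum linear_tv_lin[OF linear_tv_lin_self])
  finally show ?thesis by (simp add: add.commute)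
qed

end


locale rskew = rmat R for R :: "('b, 'k::field) tv \<Rightarrow> ('b, 'k) tv" +
  assumes R_skew: "skew_r R"
begin

lemma q_flip: "qR R b a = - flipP (qR R a b)"
proof -
  have e: "flipP (sg [b, a] 1) = sg [a, b] (1::'k)"
    unfolding flipP_def using perm21_single[of "[b]" 1 "[a]" 1 1] by simp
  have "qR R b a = - r21 R (sg [b, a] 1)"
    unfolding qR_def by (rule fun_cong[OF R_skew[unfolded skew_r_def], of "sg [b, a] 1", simplified])
  also have "\<dots> = - flipP (qR R a b)"
    by (simp only: r21_def qR_def e)
  finally show ?thesis .
qed

lemma key21_11: "length w = 2 \<Longrightarrow> key21 1 1 w ! 0 = w ! 1 \<and> key21 1 1 w ! 1 = w ! 0"
  by (cases w rule: len2[elim_format]) (auto simp: key21_def numeral_2_eq_2 length_Suc_conv)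

lemma SK: "lin (\<lambda>v. F (v!0) (v!1)) (qR R b a) = - lin (\<lambda>v. F (v!1) (v!0)) (qR R a b)"
proof -
  have "lin (\<lambda>v. F (v!0) (v!1)) (qR R b a) = - lin (\<lambda>v. F (v!0) (v!1)) (flipP (qR R a b))"
    by (subst q_flip) (rule lin_neg)
  also have "lin (\<lambda>v. F (v!0) (v!1)) (flipP (qR R a b)) = lin (\<lambda>v. F (key21 1 1 v ! 0) (key21 1 1 v ! 1)) (qR R a b)"
    unfolding flipP_def perm21_def by (rule lin_involution) (rule key21_inv)
  also have "\<dots> = lin (\<lambda>v. F (v!1) (v!0)) (qR R a b)"
  proof (rule lin_cong)
    fix w assume "w \<in> ks (qR R a b)"
    then have "length w = 2" using q_homog homog_keys by blast
    then show "F (key21 1 1 w ! 0) (key21 1 1 w ! 1) = F (w!1) (w!0)" using key21_11 by metis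
  qed
  finally show ?thesis .
qed

lemma BW_skew: "BW R y x = - perm21 (length x) (length y) (BW R x y)"
proof -
  have "BW R y x = (\<Sum>j<length y. \<Sum>i<length x. - lin (\<lambda>v. sg (y[j := v!1] @ x[i := v!0]) 1) (qR R (x!i) (y!j)))"
    unfolding BW_def by (rule sum.cong[OF refl], rule sum.cong[OF refl], rule SK)
  also have "\<dots> = - (\<Sum>i<length x. \<Sum>j<length y. lin (\<lambda>v. sg (y[j := v!1] @ x[i := v!0]) 1) (qR R (x!i) (y!j)))"
    by (simp add: sum_negf sum.swap[of _ "{..<length y}"])
  also have "(\<Sum>i<length x. \<Sum>j<length y. lin (\<lambda>v. sg (y[j := v!1] @ x[i := v!0]) 1) (qR R (x!i) (y!j)))
     = perm21 (length x) (length y) (BW R x y)"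
    by (simp add: BW_def linear_tv_sum[OF linear_perms(1)] linear_tv_lin[OF linear_perms(1)] perm21_single)
  finally show ?thesis .
qed

end

lemma sum_remove_if: "(j::nat) < n \<Longrightarrow> (\<Sum>p<n. f p) = f j + (\<Sum>p<n. if p = j then 0 else f p)"
proof -
  assume j: "j < n"
  have "(\<Sum>p<n. f p) = (\<Sum>p<n. (if p = j then f p else 0) + (if p = j then 0 else f p))"
    by (rule sum.cong) auto
  also have "\<dots> = (\<Sum>p<n. (if p = j then f p else 0)) + (\<Sum>p<n. if p = j then 0 else f p)"
    by (rule sum.distrib)
  also have "(\<Sum>p<n. (if p = j then f p else 0)) = f j"
    using j by (simp add: sum.delta')
  finally show ?thesis .
qed

context rmat
begin

lemma BW_app2: "BW R x (y @ z) =
   (\<Sum>i<length x. \<Sum>p<length y. lin (\<lambda>v. sg (x[i := v!0] @ y[p := v!1] @ z) 1) (qR R (x!i) (y!p))) +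
   (\<Sum>i<length x. \<Sum>r<length z. lin (\<lambda>v. sg (x[i := v!0] @ y @ z[r := v!1]) 1) (qR R (x!i) (z!r)))"
proof -
  have "BW R x (y @ z) = (\<Sum>i<length x. (\<Sum>p<length y. lin (\<lambda>v. sg (x[i := v!0] @ (y @ z)[p := v!1]) 1) (qR R (x!i) ((y@z)!p)))
     + (\<Sum>r<length z. lin (\<lambda>v. sg (x[i := v!0] @ (y @ z)[length y + r := v!1]) 1) (qR R (x!i) ((y@z)!(length y + r)))))"
    unfolding BW_def by (simp add: sum_split_add)
  also have "\<dots> = (\<Sum>i<length x. (\<Sum>p<length y. lin (\<lambda>v. sg (x[i := v!0] @ y[p := v!1] @ z) 1) (qR R (x!i) (y!p)))
     + (\<Sum>r<length z. lin (\<lambda>v. sg (x[i := v!0] @ y @ z[r := v!1]) 1) (qR R (x!i) (z!r))))"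
    by (intro sum.cong refl arg_cong2[where f="(+)"]) (simp_all add: list_update_append nth_append)
  finally show ?thesis by (simp add: sum.distrib)
qed

definition gA where "gA \<phi> x y z i j k = lin (\<lambda>w. lin (\<lambda>v. sg (\<phi> (x[i := v!0]) (y[j := v!1]) (z[k := w!1])) 1) (qR R (x!i) (w!0))) (qR R (y!j) (z!k))"
definition gB where "gB \<phi> x y z i j k = lin (\<lambda>w. lin (\<lambda>v. sg (\<phi> (x[i := v!0]) (y[j := w!0]) (z[k := v!1])) 1) (qR R (x!i) (w!1))) (qR R (y!j) (z!k))"
definition gC where "gC \<phi> x y z i j k = lin (\<lambda>w. \<Sum>p<length y. if p = j then 0 else lin (\<lambda>v. sg (\<phi> (x[i := v!0]) (y[j := w!0, p := v!1]) (z[k := w!1])) 1) (qR R (x!i) (y!p))) (qR R (y!j) (z!k))"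
definition gD where "gD \<phi> x y z i j k = lin (\<lambda>w. \<Sum>r<length z. if r = k then 0 else lin (\<lambda>v. sg (\<phi> (x[i := v!0]) (y[j := w!0]) (z[k := w!1, r := v!1])) 1) (qR R (x!i) (z!r))) (qR R (y!j) (z!k))"

lemma inner_expand:
  assumes jk: "j < length y" "k < length z" and h: "linear_tv h"
    and h\<phi>: "\<And>a b c. length a = length x \<Longrightarrow> length b = length y \<Longrightarrow> length c = length z \<Longrightarrow> h (sg (a @ b @ c) 1) = sg (\<phi> a b c) 1"
  shows "h (BW R x (y[j := e] @ z[k := f])) = (\<Sum>i<length x.
      lin (\<lambda>v. sg (\<phi> (x[i := v!0]) (y[j := v!1]) (z[k := f])) 1) (qR R (x!i) e)
    + (\<Sum>p<length y. if p = j then 0 else lin (\<lambda>v. sg (\<phi> (x[i := v!0]) (y[j := e, p := v!1]) (z[k := f])) 1) (qR R (x!i) (y!p)))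
    + lin (\<lambda>v. sg (\<phi> (x[i := v!0]) (y[j := e]) (z[k := v!1])) 1) (qR R (x!i) f)
    + (\<Sum>r<length z. if r = k then 0 else lin (\<lambda>v. sg (\<phi> (x[i := v!0]) (y[j := e]) (z[k := f, r := v!1])) 1) (qR R (x!i) (z!r))))"
proof -
  let ?y = "y[j := e]" and ?z = "z[k := f]"
  have "h (BW R x (?y @ ?z)) =
   (\<Sum>i<length x. \<Sum>p<length y. lin (\<lambda>v. sg (\<phi> (x[i := v!0]) (?y[p := v!1]) ?z) 1) (qR R (x!i) (?y!p))) +
   (\<Sum>i<length x. \<Sum>r<length z. lin (\<lambda>v. sg (\<phi> (x[i := v!0]) ?y (?z[r := v!1])) 1) (qR R (x!i) (?z!r)))"
    unfolding BW_app2 using h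
    by (simp add: linear_tv_sum linear_tv_lin h\<phi> linear_tv_def)
  also have "\<dots> = (\<Sum>i<length x.
      (lin (\<lambda>v. sg (\<phi> (x[i := v!0]) (y[j := v!1]) (z[k := f])) 1) (qR R (x!i) e)
    + (\<Sum>p<length y. if p = j then 0 else lin (\<lambda>v. sg (\<phi> (x[i := v!0]) (y[j := e, p := v!1]) (z[k := f])) 1) (qR R (x!i) (y!p)))))
    + (\<Sum>i<length x. (lin (\<lambda>v. sg (\<phi> (x[i := v!0]) (y[j := e]) (z[k := v!1])) 1) (qR R (x!i) f)
    + (\<Sum>r<length z. if r = k then 0 else lin (\<lambda>v. sg (\<phi> (x[i := v!0]) (y[j := e]) (z[k := f, r := v!1])) 1) (qR R (x!i) (z!r)))))"
    apply (intro arg_cong2[where f="(+)"] sum.cong refl)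
     apply (subst sum_remove_if[OF jk(1)])
     apply (intro arg_cong2[where f="(+)"] sum.cong refl)
      apply (simp add: jk)
     apply simp
    apply (subst sum_remove_if[OF jk(2)])
    apply (intro arg_cong2[where f="(+)"] sum.cong refl)
     apply (simp add: jk)
    apply simp
    done
  finally show ?thesis by (simp add: sum.distrib add.assoc)
qed

lemma T_expand:
  assumes h: "linear_tv h"
    and h\<phi>: "\<And>a b c. length a = length x \<Longrightarrow> length b = length y \<Longrightarrow> length c = length z \<Longrightarrow> h (sg (a @ b @ c) 1) = sg (\<phi> a b c) 1"
  shows "h (BB R (sg x 1) (BW R y z)) = (\<Sum>i<length x. \<Sum>j<length y. \<Sum>k<length z.
     gA \<phi> x y z i j k + gC \<phi> x y z i j k + gB \<phi> x y z i j k + gD \<phi> x y z i j k)"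
proof -
  have "h (BB R (sg x 1) (BW R y z)) = (\<Sum>j<length y. \<Sum>k<length z. lin (\<lambda>w. h (BW R x (y[j:=w!0] @ z[k:=w!1]))) (qR R (y!j) (z!k)))"
    by (simp add: BB_def BW_def[of R y z] lin_sum linear_tv_sum[OF h] linear_tv_lin[OF h] linear_tv_lin[OF linear_tv_lin_self])
  also have "\<dots> = (\<Sum>j<length y. \<Sum>k<length z. \<Sum>i<length x.
     gA \<phi> x y z i j k + gC \<phi> x y z i j k + gB \<phi> x y z i j k + gD \<phi> x y z i j k)"
    apply (intro sum.cong refl)
    subgoal for j k
      by (simp only: inner_expand[where j=j and k=k, OF _ _ h h\<phi>] lessThan_iff gA_def gB_def gC_def gD_def lin_fun_sum lin_fun_add)
    done
  also have "\<dots> = (\<Sum>i<length x. \<Sum>j<length y. \<Sum>k<length z.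
     gA \<phi> x y z i j k + gC \<phi> x y z i j k + gB \<phi> x y z i j k + gD \<phi> x y z i j k)"
    by (simp add: sum.swap[of _ "{..<length x}"])
  finally show ?thesis .
qed

end

lemma sw34: "(\<Sum>a\<in>A. \<Sum>b\<in>B. \<Sum>c\<in>C. \<Sum>d\<in>C. f a b c d) = (\<Sum>a\<in>A. \<Sum>b\<in>B. \<Sum>c\<in>C. \<Sum>d\<in>C. f a b d c)"
  by (rule sum.cong[OF refl], rule sum.cong[OF refl], rule sum.swap)

lemma rot3: "(\<Sum>b\<in>B. \<Sum>c\<in>C. \<Sum>d\<in>D. f b c d) = (\<Sum>d\<in>D. \<Sum>b\<in>B. \<Sum>c\<in>C. f b c d)"
proof -
  have "(\<Sum>b\<in>B. \<Sum>c\<in>C. \<Sum>d\<in>D. f b c d) = (\<Sum>b\<in>B. \<Sum>d\<in>D. \<Sum>c\<in>C. f b c d)"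
    by (rule sum.cong[OF refl], rule sum.swap)
  also have "\<dots> = (\<Sum>d\<in>D. \<Sum>b\<in>B. \<Sum>c\<in>C. f b c d)"
    by (rule sum.swap)
  finally show ?thesis .
qed

lemma sw24: "(\<Sum>a\<in>A. \<Sum>b\<in>B. \<Sum>c\<in>C. \<Sum>d\<in>B. f a b c d) = (\<Sum>a\<in>A. \<Sum>b\<in>B. \<Sum>c\<in>C. \<Sum>d\<in>B. f a d c b)"
proof (rule sum.cong[OF refl])
  fix a
  have "(\<Sum>b\<in>B. \<Sum>c\<in>C. \<Sum>d\<in>B. f a b c d) = (\<Sum>b\<in>B. \<Sum>d\<in>B. \<Sum>c\<in>C. f a b c d)"
    by (rule sum.cong[OF refl], rule sum.swap)
  also have "\<dots> = (\<Sum>d\<in>B. \<Sum>b\<in>B. \<Sum>c\<in>C. f a b c d)"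
    by (rule sum.swap)
  also have "\<dots> = (\<Sum>d\<in>B. \<Sum>c\<in>C. \<Sum>b\<in>B. f a b c d)"
    by (rule sum.cong[OF refl], rule sum.swap)
  finally show "(\<Sum>b\<in>B. \<Sum>c\<in>C. \<Sum>d\<in>B. f a b c d) = (\<Sum>b\<in>B. \<Sum>c\<in>C. \<Sum>d\<in>B. f a d c b)" .
qed

lemma sw14: "(\<Sum>a\<in>A. \<Sum>b\<in>B. \<Sum>c\<in>C. \<Sum>d\<in>A. f a b c d) = (\<Sum>a\<in>A. \<Sum>b\<in>B. \<Sum>c\<in>C. \<Sum>d\<in>A. f d b c a)"
proof -
  have "(\<Sum>a\<in>A. \<Sum>b\<in>B. \<Sum>c\<in>C. \<Sum>d\<in>A. f a b c d) = (\<Sum>a\<in>A. \<Sum>d\<in>A. \<Sum>b\<in>B. \<Sum>c\<in>C. f a b c d)"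
    by (rule sum.cong[OF refl], rule rot3)
  also have "\<dots> = (\<Sum>d\<in>A. \<Sum>a\<in>A. \<Sum>b\<in>B. \<Sum>c\<in>C. f a b c d)"
    by (rule sum.swap)
  also have "\<dots> = (\<Sum>d\<in>A. \<Sum>b\<in>B. \<Sum>c\<in>C. \<Sum>a\<in>A. f a b c d)"
    by (rule sum.cong[OF refl], rule rot3[symmetric])
  finally show ?thesis .
qed

lemma lin_if_sum: "lin (\<lambda>w. \<Sum>p\<in>P. if c p then 0 else F p w) Q = (\<Sum>p\<in>P. if c p then 0 else lin (F p) Q)"
  unfolding lin_fun_sum by (rule sum.cong) auto

context rskew
begin

lemma CX_outer: "lin (\<lambda>w. lin (\<lambda>v. F (w!0) (w!1) (v!0) (v!1)) (qR R c d)) (qR R b a)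
   = - lin (\<lambda>w. lin (\<lambda>v. F (v!1) (v!0) (w!0) (w!1)) (qR R a b)) (qR R c d)"
proof -
  have "lin (\<lambda>w. lin (\<lambda>v. F (w!0) (w!1) (v!0) (v!1)) (qR R c d)) (qR R b a)
     = - lin (\<lambda>w. lin (\<lambda>v. F (w!1) (w!0) (v!0) (v!1)) (qR R c d)) (qR R a b)"
    by (rule SK[where F = "\<lambda>w0 w1. lin (\<lambda>v. F w0 w1 (v!0) (v!1)) (qR R c d)"])
  also have "lin (\<lambda>w. lin (\<lambda>v. F (w!1) (w!0) (v!0) (v!1)) (qR R c d)) (qR R a b)
     = lin (\<lambda>v. lin (\<lambda>w. F (w!1) (w!0) (v!0) (v!1)) (qR R a b)) (qR R c d)"
    by (rule lin_swap)
  finally show ?thesis .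
qed

lemma CX_inner: "lin (\<lambda>w. lin (\<lambda>v. F (w!0) (w!1) (v!0) (v!1)) (qR R d c)) (qR R a b)
   = - lin (\<lambda>w. lin (\<lambda>v. F (v!0) (v!1) (w!1) (w!0)) (qR R a b)) (qR R c d)"
proof -
  have e: "(\<lambda>w. lin (\<lambda>v. F (w!0) (w!1) (v!0) (v!1)) (qR R d c)) = (\<lambda>w. - lin (\<lambda>v. F (w!0) (w!1) (v!1) (v!0)) (qR R c d))"
    by (rule ext) (rule SK[where F = "\<lambda>v0 v1. F (w!0) (w!1) v0 v1" for w])
  have "lin (\<lambda>w. lin (\<lambda>v. F (w!0) (w!1) (v!0) (v!1)) (qR R d c)) (qR R a b)
     = - lin (\<lambda>w. lin (\<lambda>v. F (w!0) (w!1) (v!1) (v!0)) (qR R c d)) (qR R a b)"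
    unfolding e by (rule lin_fun_neg)
  also have "lin (\<lambda>w. lin (\<lambda>v. F (w!0) (w!1) (v!1) (v!0)) (qR R c d)) (qR R a b)
     = lin (\<lambda>v. lin (\<lambda>w. F (w!0) (w!1) (v!1) (v!0)) (qR R a b)) (qR R c d)"
    by (rule lin_swap)
  finally show ?thesis .
qed

lemma X1_pt: assumes "j \<noteq> r" shows "lin (\<lambda>w. lin (\<lambda>v. sg (x[i:=w!0] @ y[j:=w!1, r:=v!1] @ z[k:=v!0]) 1) (qR R (z!k) (y!r))) (qR R (x!i) (y!j))
  = - lin (\<lambda>w. lin (\<lambda>v. sg (x[i:=v!0] @ y[r:=w!0, j:=v!1] @ z[k:=w!1]) 1) (qR R (x!i) (y!j))) (qR R (y!r) (z!k))"
  using CX_inner[where F = "\<lambda>w0 w1 v0 v1. sg (x[i:=w0] @ y[j:=w1, r:=v1] @ z[k:=v0]) 1" and a = "x!i" and b = "y!j" and c = "y!r" and d = "z!k"]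
  by (simp only: list_update_swap[OF assms])

lemma X1: "(\<Sum>i<length x. \<Sum>j<length y. \<Sum>k<length z. gC (\<lambda>a b c. a @ b @ c) x y z i j k)
   + (\<Sum>i<length x. \<Sum>j<length y. \<Sum>k<length z. gD (\<lambda>a b c. b @ c @ a) z x y k i j) = 0"
proof -
  define c where "c i j k p = (if p = j then 0 else lin (\<lambda>w. lin (\<lambda>v. sg (x[i:=v!0] @ y[j:=w!0, p:=v!1] @ z[k:=w!1]) 1) (qR R (x!i) (y!p))) (qR R (y!j) (z!k)))" for i j k p
  have C: "gC (\<lambda>a b c. a @ b @ c) x y z i j k = (\<Sum>p<length y. c i j k p)" for i j k
    unfolding gC_def c_def by (simp only: lin_if_sum)
  have D: "gD (\<lambda>a b c. b @ c @ a) z x y k i j = (\<Sum>r<length y. - c i r k j)" for i j k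
    unfolding gD_def c_def lin_if_sum
  proof (rule sum.cong[OF refl])
    fix r
    show "(if r = j then 0 else lin (\<lambda>w. lin (\<lambda>v. sg ((\<lambda>a b c. b @ c @ a) (z[k := v ! 0]) (x[i := w ! 0]) (y[j := w ! 1, r := v ! 1])) 1) (qR R (z ! k) (y ! r))) (qR R (x ! i) (y ! j))) =
       - (if j = r then 0 else lin (\<lambda>w. lin (\<lambda>v. sg (x[i := v ! 0] @ y[r := w ! 0, j := v ! 1] @ z[k := w ! 1]) 1) (qR R (x ! i) (y ! j))) (qR R (y ! r) (z ! k)))"
    proof (cases "r = j")
      case False
      then have "j \<noteq> r" by simp
      with False show ?thesis by (simp only: if_False X1_pt[OF \<open>j \<noteq> r\<close>])
    qed simp
  qed
  have "(\<Sum>i<length x. \<Sum>j<length y. \<Sum>k<length z. \<Sum>r<length y. c i r k j)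
      = (\<Sum>i<length x. \<Sum>j<length y. \<Sum>k<length z. \<Sum>r<length y. c i j k r)"
    by (rule sw24[symmetric])
  then show ?thesis
    by (simp add: C D sum_negf)
qed

lemma X2_pt: assumes "k \<noteq> p" shows "lin (\<lambda>w. lin (\<lambda>v. sg (x[i:=w!1] @ y[j:=v!0] @ z[k:=w!0, p:=v!1]) 1) (qR R (y!j) (z!p))) (qR R (z!k) (x!i))
  = - lin (\<lambda>w. lin (\<lambda>v. sg (x[i:=v!0] @ y[j:=w!0] @ z[p:=w!1, k:=v!1]) 1) (qR R (x!i) (z!k))) (qR R (y!j) (z!p))"
  using CX_outer[where F = "\<lambda>w0 w1 v0 v1. sg (x[i:=w1] @ y[j:=v0] @ z[k:=w0, p:=v1]) 1" and b = "z!k" and a = "x!i" and c = "y!j" and d = "z!p"]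
  by (simp only: list_update_swap[OF assms])

lemma X2: "(\<Sum>i<length x. \<Sum>j<length y. \<Sum>k<length z. gD (\<lambda>a b c. a @ b @ c) x y z i j k)
   + (\<Sum>i<length x. \<Sum>j<length y. \<Sum>k<length z. gC (\<lambda>a b c. c @ a @ b) y z x j k i) = 0"
proof -
  define e where "e i j k r = (if r = k then 0 else lin (\<lambda>w. lin (\<lambda>v. sg (x[i:=v!0] @ y[j:=w!0] @ z[k:=w!1, r:=v!1]) 1) (qR R (x!i) (z!r))) (qR R (y!j) (z!k)))" for i j k r
  have D: "gD (\<lambda>a b c. a @ b @ c) x y z i j k = (\<Sum>r<length z. e i j k r)" for i j k
    unfolding gD_def e_def by (simp only: lin_if_sum)
  have C: "gC (\<lambda>a b c. c @ a @ b) y z x j k i = (\<Sum>p<length z. - e i j p k)" for i j k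
    unfolding gC_def e_def lin_if_sum
  proof (rule sum.cong[OF refl])
    fix p
    show "(if p = k then 0 else lin (\<lambda>w. lin (\<lambda>v. sg ((\<lambda>a b c. c @ a @ b) (y[j := v ! 0]) (z[k := w ! 0, p := v ! 1]) (x[i := w ! 1])) 1) (qR R (y ! j) (z ! p))) (qR R (z ! k) (x ! i))) =
       - (if k = p then 0 else lin (\<lambda>w. lin (\<lambda>v. sg (x[i := v ! 0] @ y[j := w ! 0] @ z[p := w ! 1, k := v ! 1]) 1) (qR R (x ! i) (z ! k))) (qR R (y ! j) (z ! p)))"
    proof (cases "p = k")
      case False
      then have "k \<noteq> p" by simp
      with False show ?thesis by (simp only: if_False X2_pt[OF \<open>k \<noteq> p\<close>])
    qed simp
  qed
  have "(\<Sum>i<length x. \<Sum>j<length y. \<Sum>k<length z. \<Sum>p<length z. e i j p k)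
      = (\<Sum>i<length x. \<Sum>j<length y. \<Sum>k<length z. \<Sum>p<length z. e i j k p)"
    by (rule sw34)
  then show ?thesis
    by (simp add: C D sum_negf)
qed

lemma X3_pt: assumes "i \<noteq> p" shows "lin (\<lambda>w. lin (\<lambda>v. sg (x[i:=w!0, p:=v!1] @ y[j:=w!1] @ z[k:=v!0]) 1) (qR R (z!k) (x!p))) (qR R (x!i) (y!j))
  = - lin (\<lambda>w. lin (\<lambda>v. sg (x[p:=w!1, i:=v!1] @ y[j:=v!0] @ z[k:=w!0]) 1) (qR R (y!j) (x!i))) (qR R (z!k) (x!p))"
  using CX_outer[where F = "\<lambda>w0 w1 v0 v1. sg (x[i:=w0, p:=v1] @ y[j:=w1] @ z[k:=v0]) 1" and b = "x!i" and a = "y!j" and c = "z!k" and d = "x!p"]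
  by (simp only: list_update_swap[OF assms])

lemma X3: "(\<Sum>i<length x. \<Sum>j<length y. \<Sum>k<length z. gD (\<lambda>a b c. c @ a @ b) y z x j k i)
   + (\<Sum>i<length x. \<Sum>j<length y. \<Sum>k<length z. gC (\<lambda>a b c. b @ c @ a) z x y k i j) = 0"
proof -
  define g where "g i j k r = (if r = i then 0 else lin (\<lambda>w. lin (\<lambda>v. sg (x[i:=w!1, r:=v!1] @ y[j:=v!0] @ z[k:=w!0]) 1) (qR R (y!j) (x!r))) (qR R (z!k) (x!i)))" for i j k r
  have D: "gD (\<lambda>a b c. c @ a @ b) y z x j k i = (\<Sum>r<length x. g i j k r)" for i j k
    unfolding gD_def g_def by (simp only: lin_if_sum)
  have C: "gC (\<lambda>a b c. b @ c @ a) z x y k i j = (\<Sum>p<length x. - g p j k i)" for i j k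
    unfolding gC_def g_def lin_if_sum
  proof (rule sum.cong[OF refl])
    fix p
    show "(if p = i then 0 else lin (\<lambda>w. lin (\<lambda>v. sg ((\<lambda>a b c. b @ c @ a) (z[k := v ! 0]) (x[i := w ! 0, p := v ! 1]) (y[j := w ! 1])) 1) (qR R (z ! k) (x ! p))) (qR R (x ! i) (y ! j))) =
       - (if i = p then 0 else lin (\<lambda>w. lin (\<lambda>v. sg (x[p := w ! 1, i := v ! 1] @ y[j := v ! 0] @ z[k := w ! 0]) 1) (qR R (y ! j) (x ! i))) (qR R (z ! k) (x ! p)))"
    proof (cases "p = i")
      case False
      then have "i \<noteq> p" by simp
      with False show ?thesis by (simp only: if_False X3_pt[OF \<open>i \<noteq> p\<close>])
    qed simp
  qed
  have "(\<Sum>i<length x. \<Sum>j<length y. \<Sum>k<length z. \<Sum>p<length x. g p j k i)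
      = (\<Sum>i<length x. \<Sum>j<length y. \<Sum>k<length z. \<Sum>p<length x. g i j k p)"
    by (rule sw14[symmetric])
  then show ?thesis
    by (simp add: C D sum_negf)
qed

end

context rmat
begin

lemma r12_lin: "r12 R X = lin (\<lambda>w. if length w = 3 then tensor (R (sg [w!0, w!1] 1)) (sg [w!2] 1) else 0) X"
  unfolding r12_def lin_def
  by (simp add: sum.inter_filter if_distrib[of "smult _"] cong: if_cong)

lemma r23_lin: "r23 R X = lin (\<lambda>w. if length w = 3 then tensor (sg [w!0] 1) (R (sg [w!1, w!2] 1)) else 0) X"
  unfolding r23_def lin_def
  by (simp add: sum.inter_filter if_distrib[of "smult _"] cong: if_cong)

lemma linear_r12: "linear_tv (r12 R)"
  unfolding linear_tv_def r12_lin by simp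
lemma linear_r23: "linear_tv (r23 R)"
  unfolding linear_tv_def r23_lin by simp
lemma linear_r13: "linear_tv (r13 R)"
proof -
  have "r13 R = (\<lambda>x. P23 (r12 R (P23 x)))" by (simp add: fun_eq_iff r13_def)
  moreover have "linear_tv (\<lambda>x. P23 (r12 R (P23 x)))"
    unfolding linear_tv_def
    by (simp add: linear_tv_def[THEN iffD1, OF linear_r12] linear_tv_def[THEN iffD1, OF linear_perms(5)])
  ultimately show ?thesis by simp
qed

lemma r12_single: "r12 R (sg [a, b, c] 1) = lin (\<lambda>v. sg [v!0, v!1, c] 1) (qR R a b)"
proof -
  have "r12 R (sg [a, b, c] 1) = lin (\<lambda>v. sg (v @ [c]) 1) (qR R a b)"
    by (simp add: r12_lin tensor_lin qR_def)
  also have "\<dots> = lin (\<lambda>v. sg [v!0, v!1, c] 1) (qR R a b)"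
    by (subst lin_homog2[OF q_homog]) simp
  finally show ?thesis .
qed

lemma r23_single: "r23 R (sg [a, b, c] 1) = lin (\<lambda>v. sg [a, v!0, v!1] 1) (qR R b c)"
proof -
  have "r23 R (sg [a, b, c] 1) = lin (\<lambda>v. sg ([a] @ v) 1) (qR R b c)"
    by (simp add: r23_lin tensor_single qR_def)
  also have "\<dots> = lin (\<lambda>v. sg [a, v!0, v!1] 1) (qR R b c)"
    by (subst lin_homog2[OF q_homog]) simp
  finally show ?thesis .
qed

lemma r13_single: "r13 R (sg [a, b, c] 1) = lin (\<lambda>v. sg [v!0, b, v!1] 1) (qR R a c)"
  by (simp add: r13_def P23_single r12_single linear_tv_lin[OF linear_perms(5)])

end

context rskew
begin

lemma SK_in: "lin (\<lambda>w. lin (\<lambda>v. F w (v!0) (v!1)) (qR R b (f w))) Q = - lin (\<lambda>w. lin (\<lambda>v. F w (v!1) (v!0)) (qR R (f w) b)) Q"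
proof -
  have e: "(\<lambda>w. lin (\<lambda>v. F w (v!0) (v!1)) (qR R b (f w))) = (\<lambda>w. - lin (\<lambda>v. F w (v!1) (v!0)) (qR R (f w) b))"
    by (rule ext) (rule SK[where F = "\<lambda>v0 v1. F w v0 v1" for w])
  show ?thesis unfolding e by (rule lin_fun_neg)
qed

lemma SK_out: "lin (\<lambda>w. F (w!0) (w!1)) (qR R b a) = - lin (\<lambda>w. F (w!1) (w!0)) (qR R a b)"
  by (rule SK)

lemma M_generic:
  fixes G :: "'b \<Rightarrow> 'b \<Rightarrow> 'b \<Rightarrow> ('c, 'k) tv"
  defines "\<Phi> \<equiv> lin (\<lambda>t. G (t!0) (t!1) (t!2))"
  shows "lin (\<lambda>w. lin (\<lambda>v. G (v!0) (v!1) (w!1)) (qR R a (w!0))) (qR R b c)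
       + lin (\<lambda>w. lin (\<lambda>v. G (v!0) (w!0) (v!1)) (qR R a (w!1))) (qR R b c)
       + lin (\<lambda>w. lin (\<lambda>v. G (w!1) (v!0) (v!1)) (qR R b (w!0))) (qR R c a)
       + lin (\<lambda>w. lin (\<lambda>v. G (v!1) (v!0) (w!0)) (qR R b (w!1))) (qR R c a)
       + lin (\<lambda>w. lin (\<lambda>v. G (v!1) (w!1) (v!0)) (qR R c (w!0))) (qR R a b)
       + lin (\<lambda>w. lin (\<lambda>v. G (w!0) (v!1) (v!0)) (qR R c (w!1))) (qR R a b)
     = \<Phi> (commut (r12 R) (r13 R) (sg [a, b, c] 1) - commut (r23 R) (r12 R) (sg [a, b, c] 1) + commut (r13 R) (r23 R) (sg [a, b, c] 1))"
proof -
  have L: "linear_tv \<Phi>" unfolding \<Phi>_def by (rule linear_tv_lin_self)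
  have \<Phi>s: "\<Phi> (sg [\<alpha>, \<beta>, \<gamma>] 1) = G \<alpha> \<beta> \<gamma>" for \<alpha> \<beta> \<gamma>
    unfolding \<Phi>_def by simp
  have P1: "\<Phi> (r12 R (r13 R (sg [a, b, c] 1))) = lin (\<lambda>w. lin (\<lambda>v. G (v!0) (v!1) (w!1)) (qR R (w!0) b)) (qR R a c)"
    by (simp add: r13_single r12_single linear_tv_lin[OF linear_r12] linear_tv_lin[OF L] \<Phi>s)
  have P2: "\<Phi> (r13 R (r12 R (sg [a, b, c] 1))) = lin (\<lambda>w. lin (\<lambda>v. G (v!0) (w!1) (v!1)) (qR R (w!0) c)) (qR R a b)"
    by (simp add: r13_single r12_single linear_tv_lin[OF linear_r13] linear_tv_lin[OF L] \<Phi>s)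
  have P3: "\<Phi> (r23 R (r12 R (sg [a, b, c] 1))) = lin (\<lambda>w. lin (\<lambda>v. G (w!0) (v!0) (v!1)) (qR R (w!1) c)) (qR R a b)"
    by (simp add: r23_single r12_single linear_tv_lin[OF linear_r23] linear_tv_lin[OF L] \<Phi>s)
  have P4: "\<Phi> (r12 R (r23 R (sg [a, b, c] 1))) = lin (\<lambda>w. lin (\<lambda>v. G (v!0) (v!1) (w!1)) (qR R a (w!0))) (qR R b c)"
    by (simp add: r23_single r12_single linear_tv_lin[OF linear_r12] linear_tv_lin[OF L] \<Phi>s)
  have P5: "\<Phi> (r13 R (r23 R (sg [a, b, c] 1))) = lin (\<lambda>w. lin (\<lambda>v. G (v!0) (w!0) (v!1)) (qR R a (w!1))) (qR R b c)"
    by (simp add: r23_single r13_single linear_tv_lin[OF linear_r13] linear_tv_lin[OF L] \<Phi>s)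
  have P6: "\<Phi> (r23 R (r13 R (sg [a, b, c] 1))) = lin (\<lambda>w. lin (\<lambda>v. G (w!0) (v!0) (v!1)) (qR R b (w!1))) (qR R a c)"
    by (simp add: r23_single r13_single linear_tv_lin[OF linear_r23] linear_tv_lin[OF L] \<Phi>s)
  have A2: "lin (\<lambda>w. lin (\<lambda>v. G (w!1) (v!0) (v!1)) (qR R b (w!0))) (qR R c a) = - \<Phi> (r23 R (r13 R (sg [a, b, c] 1)))"
    unfolding P6 by (rule SK_out[where F = "\<lambda>w0 w1. lin (\<lambda>v. G w1 (v!0) (v!1)) (qR R b w0)"])
  have B2: "lin (\<lambda>w. lin (\<lambda>v. G (v!1) (v!0) (w!0)) (qR R b (w!1))) (qR R c a) = \<Phi> (r12 R (r13 R (sg [a, b, c] 1)))"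
  proof -
    have "lin (\<lambda>w. lin (\<lambda>v. G (v!1) (v!0) (w!0)) (qR R b (w!1))) (qR R c a)
       = - lin (\<lambda>w. lin (\<lambda>v. G (v!1) (v!0) (w!1)) (qR R b (w!0))) (qR R a c)"
      by (rule SK_out[where F = "\<lambda>w0 w1. lin (\<lambda>v. G (v!1) (v!0) w0) (qR R b w1)"])
    also have "lin (\<lambda>w. lin (\<lambda>v. G (v!1) (v!0) (w!1)) (qR R b (w!0))) (qR R a c)
       = - lin (\<lambda>w. lin (\<lambda>v. G (v!0) (v!1) (w!1)) (qR R (w!0) b)) (qR R a c)"
      by (rule SK_in[where F = "\<lambda>w v0 v1. G v1 v0 (w!1)" and f = "\<lambda>w. w!0"])
    finally show ?thesis unfolding P1 by simp
  qed
  have A3: "lin (\<lambda>w. lin (\<lambda>v. G (v!1) (w!1) (v!0)) (qR R c (w!0))) (qR R a b) = - \<Phi> (r13 R (r12 R (sg [a, b, c] 1)))"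
    unfolding P2 by (rule SK_in[where F = "\<lambda>w v0 v1. G v1 (w!1) v0" and f = "\<lambda>w. w!0"])
  have B3: "lin (\<lambda>w. lin (\<lambda>v. G (w!0) (v!1) (v!0)) (qR R c (w!1))) (qR R a b) = - \<Phi> (r23 R (r12 R (sg [a, b, c] 1)))"
    unfolding P3 by (rule SK_in[where F = "\<lambda>w v0 v1. G (w!0) v1 v0" and f = "\<lambda>w. w!1"])
  show ?thesis
    unfolding commut_def linear_tv_diff[OF L] linear_tv_def[THEN iffD1, OF L, THEN conjunct1, rule_format]
    unfolding A2 B2 A3 B3 P4[symmetric] P5[symmetric]
    by (simp add: algebra_simps)
qed

lemma M_word:
  "gA (\<lambda>a b c. a @ b @ c) x y z i j k + gB (\<lambda>a b c. a @ b @ c) x y z i j k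
     + gA (\<lambda>a b c. c @ a @ b) y z x j k i + gB (\<lambda>a b c. c @ a @ b) y z x j k i
     + gA (\<lambda>a b c. b @ c @ a) z x y k i j + gB (\<lambda>a b c. b @ c @ a) z x y k i j
   = lin (\<lambda>t. sg (x[i := t!0] @ y[j := t!1] @ z[k := t!2]) 1) (CYx R (sg [x!i, y!j, z!k] 1))"
  unfolding gA_def gB_def CYx_def
  by (rule M_generic[where G = "\<lambda>\<alpha> \<beta> \<gamma>. sg (x[i := \<alpha>] @ y[j := \<beta>] @ z[k := \<gamma>]) 1" and a = "x!i" and b = "y!j" and c = "z!k"])

definition JacW where
  "JacW x y z = BB R (sg x 1) (BW R y z) + perm231 (length y) (length z) (length x) (BB R (sg y 1) (BW R z x))
     + perm312 (length z) (length x) (length y) (BB R (sg z 1) (BW R x y))"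

lemma word_jacobi_expr:
  "JacW x y z = (\<Sum>i<length x. \<Sum>j<length y. \<Sum>k<length z.
      lin (\<lambda>t. sg (x[i := t!0] @ y[j := t!1] @ z[k := t!2]) 1) (CYx R (sg [x!i, y!j, z!k] 1)))"
proof -
  let ?S = "\<lambda>f. (\<Sum>i<length x. \<Sum>j<length y. \<Sum>k<length z. f i j k)"
  let ?f1 = "\<lambda>a b c. a @ b @ c" and ?f2 = "\<lambda>a b c. c @ a @ b" and ?f3 = "\<lambda>a b c. b @ c @ a"
  have lid: "linear_tv (\<lambda>p. p)" by (simp add: linear_tv_def)
  have T1: "BB R (sg x 1) (BW R y z) = ?S (\<lambda>i j k. gA ?f1 x y z i j k + gC ?f1 x y z i j k + gB ?f1 x y z i j k + gD ?f1 x y z i j k)"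
    by (rule T_expand[OF lid]) simp
  have T2: "perm231 (length y) (length z) (length x) (BB R (sg y 1) (BW R z x)) = ?S (\<lambda>i j k. gA ?f2 y z x j k i + gC ?f2 y z x j k i + gB ?f2 y z x j k i + gD ?f2 y z x j k i)"
  proof -
    have "perm231 (length y) (length z) (length x) (BB R (sg y 1) (BW R z x)) = (\<Sum>j<length y. \<Sum>k<length z. \<Sum>i<length x. gA ?f2 y z x j k i + gC ?f2 y z x j k i + gB ?f2 y z x j k i + gD ?f2 y z x j k i)"
      by (rule T_expand[OF linear_perms(2)]) (simp add: perm231_single)
    also have "\<dots> = ?S (\<lambda>i j k. gA ?f2 y z x j k i + gC ?f2 y z x j k i + gB ?f2 y z x j k i + gD ?f2 y z x j k i)"
      by (rule rot3)
    finally show ?thesis .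
  qed
  have T3: "perm312 (length z) (length x) (length y) (BB R (sg z 1) (BW R x y)) = ?S (\<lambda>i j k. gA ?f3 z x y k i j + gC ?f3 z x y k i j + gB ?f3 z x y k i j + gD ?f3 z x y k i j)"
  proof -
    have "perm312 (length z) (length x) (length y) (BB R (sg z 1) (BW R x y)) = (\<Sum>k<length z. \<Sum>i<length x. \<Sum>j<length y. gA ?f3 z x y k i j + gC ?f3 z x y k i j + gB ?f3 z x y k i j + gD ?f3 z x y k i j)"
      by (rule T_expand[OF linear_perms(3)]) (simp add: perm312_single)
    also have "\<dots> = ?S (\<lambda>i j k. gA ?f3 z x y k i j + gC ?f3 z x y k i j + gB ?f3 z x y k i j + gD ?f3 z x y k i j)"
      by (rule rot3[symmetric])
    finally show ?thesis .
  qed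
  have "JacW x y z = ?S (\<lambda>i j k. gA ?f1 x y z i j k + gB ?f1 x y z i j k + gA ?f2 y z x j k i + gB ?f2 y z x j k i + gA ?f3 z x y k i j + gB ?f3 z x y k i j)
     + (?S (\<lambda>i j k. gC ?f1 x y z i j k) + ?S (\<lambda>i j k. gD ?f3 z x y k i j))
     + (?S (\<lambda>i j k. gD ?f1 x y z i j k) + ?S (\<lambda>i j k. gC ?f2 y z x j k i))
     + (?S (\<lambda>i j k. gD ?f2 y z x j k i) + ?S (\<lambda>i j k. gC ?f3 z x y k i j))"
    unfolding JacW_def T1 T2 T3 by (simp add: sum.distrib algebra_simps)
  also have "\<dots> = (\<Sum>i<length x. \<Sum>j<length y. \<Sum>k<length z.
      lin (\<lambda>t. sg (x[i := t!0] @ y[j := t!1] @ z[k := t!2]) 1) (CYx R (sg [x!i, y!j, z!k] 1)))"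
    using X1[where x=x and y=y and z=z] X2[where x=x and y=y and z=z] X3[where x=x and y=y and z=z]
    by (simp only: M_word add_0_right)
  finally show ?thesis .
qed

lemma word_jacobi:
  assumes cy: "CYBE R"
  shows "JacW x y z = 0"
proof -
  have "CYx R (sg [x!i, y!j, z!k] 1) = 0" for i j k
    using cy unfolding CYBE_def CYx_def by (simp add: homog_single)
  then show ?thesis unfolding word_jacobi_expr by simp
qed

end

lemma lin_cong2: "(\<And>x y. x \<in> ks p \<Longrightarrow> y \<in> ks q \<Longrightarrow> A x y = B x y) \<Longrightarrow>
   lin (\<lambda>x. lin (\<lambda>y. A x y) q) p = lin (\<lambda>x. lin (\<lambda>y. B x y) q) p"
  by (intro lin_cong) auto

lemma lin_cong3: "(\<And>x y z. x \<in> ks p \<Longrightarrow> y \<in> ks q \<Longrightarrow> z \<in> ks r \<Longrightarrow> A x y z = B x y z) \<Longrightarrow>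
   lin (\<lambda>x. lin (\<lambda>y. lin (\<lambda>z. A x y z) r) q) p = lin (\<lambda>x. lin (\<lambda>y. lin (\<lambda>z. B x y z) r) q) p"
  by (intro lin_cong) auto

lemma lin_rot3: "lin (\<lambda>y. lin (\<lambda>z. lin (\<lambda>x. F x y z) u) w) v = lin (\<lambda>x. lin (\<lambda>y. lin (\<lambda>z. F x y z) w) v) u"
proof -
  have "(\<lambda>y. lin (\<lambda>z. lin (\<lambda>x. F x y z) u) w) = (\<lambda>y. lin (\<lambda>x. lin (\<lambda>z. F x y z) w) u)"
    by (rule ext) (rule lin_swap)
  then have "lin (\<lambda>y. lin (\<lambda>z. lin (\<lambda>x. F x y z) u) w) v = lin (\<lambda>y. lin (\<lambda>x. lin (\<lambda>z. F x y z) w) u) v"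
    by simp
  also have "\<dots> = lin (\<lambda>x. lin (\<lambda>y. lin (\<lambda>z. F x y z) w) v) u"
    by (rule lin_swap)
  finally show ?thesis .
qed

lemma lin_rot3': "lin (\<lambda>z. lin (\<lambda>x. lin (\<lambda>y. F x y z) v) u) w = lin (\<lambda>x. lin (\<lambda>y. lin (\<lambda>z. F x y z) w) v) u"
proof -
  have "lin (\<lambda>z. lin (\<lambda>x. lin (\<lambda>y. F x y z) v) u) w = lin (\<lambda>x. lin (\<lambda>z. lin (\<lambda>y. F x y z) v) w) u"
    by (rule lin_swap)
  also have "(\<lambda>x. lin (\<lambda>z. lin (\<lambda>y. F x y z) v) w) = (\<lambda>x. lin (\<lambda>y. lin (\<lambda>z. F x y z) w) v)"
    by (rule ext) (rule lin_swap)
  finally show ?thesis .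
qed

lemma lin_lin: "lin G (lin F p) = lin (\<lambda>x. lin G (F x)) p"
  by (rule linear_tv_lin[OF linear_tv_lin_self])

lemma lin_zero_fun: "(\<And>w. w \<in> ks p \<Longrightarrow> F w = 0) \<Longrightarrow> lin F p = 0"
  by (simp add: lin_def)

context rmat
begin

lemma BB_sg1: "BB R (sg x 1) q = lin (\<lambda>y. BW R x y) q"
  by (simp add: BB_def)

lemma BB_lin2: "BB R p (lin F q) = lin (\<lambda>y. BB R p (F y)) q"
  unfolding BB_def lin_lin by (rule lin_swap)

lemma BB_alt: "BB R u Q = lin (\<lambda>x. BB R (sg x 1) Q) u"
  by (simp add: BB_def)

lemma BB_homog: "homog m p \<Longrightarrow> homog n q \<Longrightarrow> homog (m + n) (BB R p q)"
proof -
  assume hp: "homog m p" and hq: "homog n q"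
  show ?thesis unfolding BB_def
  proof (intro homog_lin)
    fix x y assume "x \<in> ks p" "y \<in> ks q"
    then have "length x = m" "length y = n" using hp hq homog_keys by blast+
    then show "homog (m + n) (BW R x y)" using BW_homog[of x y] by simp
  qed
qed

end

context rskew
begin

lemma BB_skew': "homog m v \<Longrightarrow> homog n w \<Longrightarrow> BB R w v = - perm21 m n (BB R v w)"
proof -
  assume hv: "homog m v" and hw: "homog n w"
  have "BB R w v = lin (\<lambda>y. lin (\<lambda>x. - perm21 (length x) (length y) (BW R x y)) v) w"
    unfolding BB_def by (intro lin_cong) (rule BW_skew)
  also have "\<dots> = lin (\<lambda>y. lin (\<lambda>x. - perm21 m n (BW R x y)) v) w"
  proof (rule lin_cong2)
    fix y x assume "y \<in> ks w" "x \<in> ks v"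
    then have "length x = m" "length y = n" using homog_keys hv hw by blast+
    then show "- perm21 (length x) (length y) (BW R x y) = - perm21 m n (BW R x y)" by simp
  qed
  also have "\<dots> = lin (\<lambda>x. lin (\<lambda>y. - perm21 m n (BW R x y)) w) v"
    by (rule lin_swap)
  also have "\<dots> = - perm21 m n (BB R v w)"
    unfolding BB_def
    by (simp only: linear_tv_lin[OF linear_perms(1)] lin_fun_neg)
  finally show ?thesis .
qed

lemma BB_lin1: "BB R (lin F p) q = lin (\<lambda>x. BB R (F x) q) p"
  unfolding BB_def by (rule lin_lin)

lemma BB_E: "BB R a (BB R b c) = lin (\<lambda>x. lin (\<lambda>y. lin (\<lambda>z. BB R (sg x 1) (BW R y z)) c) b) a"
  by (subst BB_alt) (simp only: BB_def[of R b c] BB_lin2)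

lemma BB_jacobi:
  assumes cy: "CYBE R" and hu: "homog l u" and hv: "homog m v" and hw: "homog n w"
  shows "BB R u (BB R v w) + perm231 m n l (BB R v (BB R w u)) + perm312 n l m (BB R w (BB R u v)) = 0"
proof -
  have e2: "perm231 m n l (BB R v (BB R w u)) = lin (\<lambda>x. lin (\<lambda>y. lin (\<lambda>z. perm231 m n l (BB R (sg y 1) (BW R z x))) w) v) u"
    by (simp only: BB_E linear_tv_lin[OF linear_perms(2)]) (rule lin_rot3)
  have e3: "perm312 n l m (BB R w (BB R u v)) = lin (\<lambda>x. lin (\<lambda>y. lin (\<lambda>z. perm312 n l m (BB R (sg z 1) (BW R x y))) w) v) u"
    by (simp only: BB_E linear_tv_lin[OF linear_perms(3)]) (rule lin_rot3')
  have "BB R u (BB R v w) + perm231 m n l (BB R v (BB R w u)) + perm312 n l m (BB R w (BB R u v))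
     = lin (\<lambda>x. lin (\<lambda>y. lin (\<lambda>z. BB R (sg x 1) (BW R y z) + perm231 m n l (BB R (sg y 1) (BW R z x)) + perm312 n l m (BB R (sg z 1) (BW R x y))) w) v) u"
    unfolding e2 e3 by (simp only: BB_E lin_fun_add)
  also have "\<dots> = lin (\<lambda>x. lin (\<lambda>y. lin (\<lambda>z. JacW x y z) w) v) u"
  proof (rule lin_cong3)
    fix x y z assume "x \<in> ks u" "y \<in> ks v" "z \<in> ks w"
    then have "length x = l" "length y = m" "length z = n" using homog_keys hu hv hw by blast+
    then show "BB R (sg x 1) (BW R y z) + perm231 m n l (BB R (sg y 1) (BW R z x)) + perm312 n l m (BB R (sg z 1) (BW R x y)) = JacW x y z"
      by (simp add: JacW_def)
  qed
  also have "\<dots> = 0"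
    by (simp add: word_jacobi[OF cy])
  finally show ?thesis .
qed

lemma tensor_alt: "tensor u Q = lin (\<lambda>x. tensor (sg x 1) Q) u"
  by (simp add: tensor_lin)

lemma tensor_sg_lin: "tensor (sg x 1) (lin F q) = lin (\<lambda>y. tensor (sg x 1) (F y)) q"
  by (simp add: tensor_single lin_lin)

lemma BB_leibniz:
  assumes hu: "homog l u" and hv: "homog m v" and hw: "homog n w"
  shows "BB R (tensor u v) w = tensor u (BB R v w) + perm213 m l n (tensor v (BB R u w))"
proof -
  have "BB R (tensor u v) w = lin (\<lambda>x. lin (\<lambda>y. lin (\<lambda>z. BW R (x @ y) z) w) v) u"
    by (simp only: tensor_lin BB_lin1 BB_sg1)
  also have "\<dots> = lin (\<lambda>x. lin (\<lambda>y. lin (\<lambda>z. tensor (sg x 1) (BW R y z) + perm213 m l n (tensor (sg y 1) (BW R x z))) w) v) u"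
  proof (rule lin_cong3)
    fix x y z assume "x \<in> ks u" "y \<in> ks v" "z \<in> ks w"
    then have "length x = l" "length y = m" "length z = n" using homog_keys hu hv hw by blast+
    then show "BW R (x @ y) z = tensor (sg x 1) (BW R y z) + perm213 m l n (tensor (sg y 1) (BW R x z))"
      by (simp add: BW_leibniz)
  qed
  also have "\<dots> = lin (\<lambda>x. lin (\<lambda>y. lin (\<lambda>z. tensor (sg x 1) (BW R y z)) w) v) u
      + lin (\<lambda>x. lin (\<lambda>y. lin (\<lambda>z. perm213 m l n (tensor (sg y 1) (BW R x z))) w) v) u"
    by (simp only: lin_fun_add)
  also have "lin (\<lambda>x. lin (\<lambda>y. lin (\<lambda>z. tensor (sg x 1) (BW R y z)) w) v) u = tensor u (BB R v w)"
    by (simp only: tensor_alt[of u] BB_def[of R v w] tensor_sg_lin)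
  also have "lin (\<lambda>x. lin (\<lambda>y. lin (\<lambda>z. perm213 m l n (tensor (sg y 1) (BW R x z))) w) v) u
     = lin (\<lambda>y. lin (\<lambda>x. lin (\<lambda>z. perm213 m l n (tensor (sg y 1) (BW R x z))) w) u) v"
    by (rule lin_swap)
  also have "\<dots> = perm213 m l n (tensor v (BB R u w))"
    by (simp only: tensor_alt[of v] BB_def[of R u w] tensor_sg_lin linear_tv_lin[OF linear_perms(4)])
  finally show ?thesis .
qed

lemma BB_twisted: assumes cy: "CYBE R" shows "twisted_poisson (BB R)"
  unfolding twisted_poisson_def
proof (intro conjI allI impI)
  fix p q s :: "('b, 'k) tv"
  show "BB R (p + q) s = BB R p s + BB R q s" by (simp add: BB_def)
  show "BB R s (p + q) = BB R s p + BB R s q" by (simp add: BB_def lin_fun_add)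
next
  fix c :: 'k and p q :: "('b, 'k) tv"
  show "BB R (smult c p) q = smult c (BB R p q)" by (simp add: BB_def)
  show "BB R p (smult c q) = smult c (BB R p q)" by (simp add: BB_def lin_fun_smult)
next
  fix m n and p q :: "('b, 'k) tv" assume "homog m p" "homog n q"
  then show "homog (m + n) (BB R p q)" by (rule BB_homog)
next
  fix m n and v w :: "('b, 'k) tv" assume "homog m v" "homog n w"
  then show "BB R w v = - perm21 m n (BB R v w)" by (rule BB_skew')
next
  fix l m n and u v w :: "('b, 'k) tv" assume "homog l u" "homog m v" "homog n w"
  then show "BB R u (BB R v w) + perm231 m n l (BB R v (BB R w u)) + perm312 n l m (BB R w (BB R u v)) = 0"
    by (rule BB_jacobi[OF cy])
next
  fix l m n and u v w :: "('b, 'k) tv" assume "homog l u" "homog m v" "homog n w"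
  then show "BB R (tensor u v) w = tensor u (BB R v w) + perm213 m l n (tensor v (BB R u w))"
    by (rule BB_leibniz)
qed

end

lemma assoc_r_lin: "assoc_r br p = lin (\<lambda>w. if length w = 2 then br (sg [w!0] 1) (sg [w!1] 1) else 0) p"
  unfolding assoc_r_def lin_def
  by (simp add: sum.inter_filter if_distrib[of "smult _"] cong: if_cong)

lemma proj2_lin: "proj 2 p = lin (\<lambda>w. if length w = 2 then sg w 1 else 0) p"
  unfolding proj_def lin_def
  by (simp add: sum.inter_filter if_distrib[of "smult _"] cong: if_cong)

context rmat
begin

lemma assoc_BB: "assoc_r (BB R) = R"
proof (rule ext)
  fix p
  have "R p = R (proj 2 p)" using R_End by (simp add: EndVV_def)
  also have "\<dots> = lin (\<lambda>w. if length w = 2 then R (sg w 1) else 0) p"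
    unfolding proj2_lin by (simp add: linear_tv_lin[OF R_linear] if_distrib[of R] linear_tv_zero[OF R_linear] cong: if_cong)
  also have "\<dots> = assoc_r (BB R) p"
    unfolding assoc_r_lin
  proof (rule lin_cong)
    fix w :: "'b list"
    show "(if length w = 2 then R (sg w 1) else 0) = (if length w = 2 then BB R (sg [w!0] 1) (sg [w!1] 1) else 0)"
    proof (cases "length w = 2")
      case True
      then have "w = [w!0, w!1]" by (rule len2)
      then have "R (sg w 1) = qR R (w!0) (w!1)" unfolding qR_def by metis
      with True show ?thesis by (simp add: BB_sg1 BW_single)
    qed simp
  qed
  finally show "assoc_r (BB R) p = R p" by simp
qed

end

lemma homog_tensor: "homog m p \<Longrightarrow> homog n q \<Longrightarrow> homog (m + n) (tensor p q)"
  unfolding tensor_lin by (intro homog_lin homog_single) (simp add: homog_keys)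

lemma key21_11g: "length w = 2 \<Longrightarrow> key21 1 1 w ! 0 = w ! 1 \<and> key21 1 1 w ! 1 = w ! 0"
  by (cases w rule: len2[elim_format]) (auto simp: key21_def numeral_2_eq_2 length_Suc_conv)

lemma homog_tensor': "homog m p \<Longrightarrow> homog n q \<Longrightarrow> k = m + n \<Longrightarrow> homog k (tensor p q)"
  using homog_tensor by blast

lemma homog_P23: "homog 3 p \<Longrightarrow> homog 3 (P23 p)"
  unfolding homog_def P23_def
  by (auto simp: keys_map_key[OF inj_keys(5)] key_swap23_def split: if_splits)

context rmat
begin

lemma homog_r12: "homog 3 (r12 R X)"
  unfolding r12_lin
  by (intro homog_lin) (auto intro!: homog_tensor[of 2 _ 1, simplified] R_homog homog_single)

lemma homog_r23: "homog 3 (r23 R X)"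
  unfolding r23_lin
proof (intro homog_lin)
  fix w :: "'b list"
  have "homog 3 (tensor (sg [w!0] 1) (R (sg [w!1, w!2] 1)))"
    by (rule homog_tensor'[of 1 _ 2]) (simp add: homog_single, rule R_homog, arith)
  then show "homog 3 (if length w = 3 then tensor (sg [w!0] 1) (R (sg [w!1, w!2] 1)) else 0)" by simp
qed

lemma homog_r13: "homog 3 (r13 R X)"
  unfolding r13_def by (intro homog_P23 homog_r12)

lemma homog_CYx: "homog 3 (CYx R X)"
  unfolding CYx_def commut_def
  by (intro homog_add homog_diff homog_r12 homog_r13 homog_r23)

lemma linear_CYx: "linear_tv (CYx R)"
  using linear_r12 linear_r13 linear_r23
  unfolding linear_tv_def CYx_def commut_def
  by (simp add: algebra_simps)

end

locale tpb =
  fixes br :: "('b, 'k::field) tv \<Rightarrow> ('b, 'k) tv \<Rightarrow> ('b, 'k) tv"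
  assumes tp: "twisted_poisson br"
begin

lemmas tpc = tp[unfolded twisted_poisson_def]
lemma br_add1: "br (p + q) s = br p s + br q s" using tpc[THEN conjunct1] by blast
lemma br_add2: "br s (p + q) = br s p + br s q" using tpc[THEN conjunct2, THEN conjunct1] by blast
lemma br_smult1: "br (smult c p) q = smult c (br p q)" using tpc[THEN conjunct2, THEN conjunct2, THEN conjunct1] by blast
lemma br_smult2: "br p (smult c q) = smult c (br p q)" using tpc[THEN conjunct2, THEN conjunct2, THEN conjunct2, THEN conjunct1] by blast
lemma br_graded: "homog m p \<Longrightarrow> homog n q \<Longrightarrow> homog (m + n) (br p q)"
  using tpc[THEN conjunct2, THEN conjunct2, THEN conjunct2, THEN conjunct2, THEN conjunct1] by blast
lemma br_skew: "homog m v \<Longrightarrow> homog n w \<Longrightarrow> br w v = - perm21 m n (br v w)"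
  using tpc[THEN conjunct2, THEN conjunct2, THEN conjunct2, THEN conjunct2, THEN conjunct2, THEN conjunct1] by blast
lemma br_jacobi: "homog l u \<Longrightarrow> homog m v \<Longrightarrow> homog n w \<Longrightarrow>
        br u (br v w) + perm231 m n l (br v (br w u)) + perm312 n l m (br w (br u v)) = 0"
  using tpc[THEN conjunct2, THEN conjunct2, THEN conjunct2, THEN conjunct2, THEN conjunct2, THEN conjunct2, THEN conjunct1] by blast
lemma br_leibniz: "homog l u \<Longrightarrow> homog m v \<Longrightarrow> homog n w \<Longrightarrow>
        br (tensor u v) w = tensor u (br v w) + perm213 m l n (tensor v (br u w))"
  using tpc[THEN conjunct2, THEN conjunct2, THEN conjunct2, THEN conjunct2, THEN conjunct2, THEN conjunct2, THEN conjunct2] by blast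

lemma lin1: "linear_tv (\<lambda>p. br p q)" by (simp add: linear_tv_def br_add1 br_smult1)
lemma lin2: "linear_tv (br p)" by (simp add: linear_tv_def br_add2 br_smult2)

lemma br_expand: "br p q = lin (\<lambda>x. lin (\<lambda>y. br (sg x 1) (sg y 1)) q) p"
proof -
  have "br p q = br (lin (\<lambda>w. sg w 1) p) (lin (\<lambda>w. sg w 1) q)" by (simp only: lin_single_id)
  also have "\<dots> = lin (\<lambda>x. br (sg x 1) (lin (\<lambda>w. sg w 1) q)) p"
    by (rule linear_tv_lin[OF lin1])
  also have "\<dots> = lin (\<lambda>x. lin (\<lambda>y. br (sg x 1) (sg y 1)) q) p"
    by (simp only: linear_tv_lin[OF lin2])
  finally show ?thesis .
qed

abbreviation "RR \<equiv> assoc_r br"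

lemma RR_End: "RR \<in> EndVV"
  unfolding EndVV_def
proof (intro CollectI conjI allI)
  fix p q :: "('b, 'k) tv" and c :: 'k
  show "RR (p + q) = RR p + RR q" by (simp add: assoc_r_lin)
  show "RR (smult c p) = smult c (RR p)" by (simp add: assoc_r_lin)
  show "RR p = RR (proj 2 p)"
    unfolding assoc_r_lin proj2_lin lin_lin by (rule lin_cong) simp
  show "homog 2 (RR p)"
    unfolding assoc_r_lin
  proof (intro homog_lin)
    fix w :: "'b list"
    have "homog 2 (br (sg [w!0] 1) (sg [w!1] 1))"
      using br_graded[of 1 "sg [w!0] 1" 1 "sg [w!1] 1"] unfolding one_add_one by (simp add: homog_single)
    then show "homog 2 (if length w = 2 then br (sg [w!0] 1) (sg [w!1] 1) else 0)"
      by simp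
  qed
qed

lemma perm21_invol: "perm21 1 1 (perm21 1 1 X) = X"
  by (rule poly_mapping_eqI) (simp add: lookup_perms key21_inv)

lemma RR_skew: "skew_r RR"
  unfolding skew_r_def
proof (rule ext)
  fix p
  let ?F = "\<lambda>w. if length w = 2 then br (sg [w!0] 1) (sg [w!1] 1) else 0"
  have "r21 RR p = lin (\<lambda>w. flipP (?F (key21 1 1 w))) p"
    unfolding r21_def assoc_r_lin flipP_def
    by (simp only: perm21_def lin_involution[OF key21_inv] linear_tv_lin[OF linear_perms(1)[unfolded perm21_def]])
  then have "- r21 RR p = lin (\<lambda>w. - flipP (?F (key21 1 1 w))) p"
    by (simp add: lin_fun_neg)
  also have "\<dots> = lin ?F p"
  proof (rule lin_cong)
    fix w :: "'b list"
    show "- flipP (?F (key21 1 1 w)) = ?F w"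
    proof (cases "length w = 2")
      case True
      then have l: "length (key21 1 1 w) = 2" by (simp add: key21_def)
      have k: "key21 1 1 w ! 0 = w ! 1" "key21 1 1 w ! 1 = w ! 0" using key21_11g[OF True] by auto
      have "br (sg [w!1] 1) (sg [w!0] 1) = - perm21 1 1 (br (sg [w!0] 1) (sg [w!1] 1))"
        by (rule br_skew) (simp_all add: homog_single)
      then show ?thesis using True l k
        by (simp add: flipP_def linear_tv_neg[OF linear_perms(1)] perm21_invol del: One_nat_def)
    next
      case False
      then show ?thesis by (simp add: key21_def flipP_def linear_tv_zero[OF linear_perms(1)])
    qed
  qed
  finally show "RR p = - r21 RR p" by (simp add: assoc_r_lin)
qed

sublocale rskew RR
  by unfold_locales (rule RR_End, rule RR_skew)

lemma tensor_nil: "tensor (sg [] 1) X = X"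
  by (simp add: tensor_single lin_single_id)

lemma perm213_00: "perm213 0 0 n X = X"
proof -
  have e: "key213 0 0 n = (\<lambda>w. w)" by (simp add: key213_def fun_eq_iff)
  show ?thesis unfolding perm213_def e by (rule map_key_id)
qed

lemma br_nil: "br (sg [] 1) (sg y 1) = 0"
proof -
  have h0: "homog 0 (sg [] (1::'k))" by (simp add: homog_single)
  have "br (tensor (sg [] 1) (sg [] 1)) (sg y 1) = tensor (sg [] 1) (br (sg [] 1) (sg y 1)) + perm213 0 0 (length y) (tensor (sg [] 1) (br (sg [] 1) (sg y 1)))"
    by (rule br_leibniz[OF h0 h0]) (simp add: homog_single)
  then have "br (sg [] 1) (sg y 1) = br (sg [] 1) (sg y 1) + br (sg [] 1) (sg y 1)"
    by (simp add: tensor_nil perm213_00)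
  then show ?thesis by simp
qed

lemma sg_cons: "sg (b # y) 1 = tensor (sg [b] 1) (sg y (1::'k))"
  by (simp add: tensor_single)

lemma br_letters: "br (sg [b] 1) (sg [a] 1) = BW RR [b] [a]"
  by (simp add: BW_single qR_def assoc_r_lin)

lemma br_right_letter: "br (sg y 1) (sg [a] 1) = BW RR y [a]"
proof (induction y)
  case Nil
  then show ?case by (simp add: br_nil)
next
  case (Cons b y)
  have "br (sg (b # y) 1) (sg [a] 1) = tensor (sg [b] 1) (br (sg y 1) (sg [a] 1)) + perm213 (length y) 1 1 (tensor (sg y 1) (br (sg [b] 1) (sg [a] 1)))"
    by (subst sg_cons, rule br_leibniz) (simp_all add: homog_single)
  also have "\<dots> = BW RR ([b] @ y) [a]"
    by (simp only: Cons.IH br_letters BW_leibniz) simp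
  finally show ?case by simp
qed

lemma br_left_letter: "br (sg [a] 1) (sg y 1) = BW RR [a] y"
proof -
  have "br (sg [a] 1) (sg y 1) = - perm21 (length y) 1 (br (sg y 1) (sg [a] 1))"
    by (rule br_skew) (simp_all add: homog_single)
  also have "\<dots> = BW RR [a] y"
    using BW_skew[of "[a]" y] by (simp only: br_right_letter) simp
  finally show ?thesis .
qed

lemma br_words: "br (sg x 1) (sg y 1) = BW RR x y"
proof (induction x)
  case Nil
  then show ?case by (simp add: br_nil)
next
  case (Cons b x)
  have "br (sg (b # x) 1) (sg y 1) = tensor (sg [b] 1) (br (sg x 1) (sg y 1)) + perm213 (length x) 1 (length y) (tensor (sg x 1) (br (sg [b] 1) (sg y 1)))"
    by (subst sg_cons, rule br_leibniz) (simp_all add: homog_single)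
  also have "\<dots> = BW RR ([b] @ x) y"
    by (simp only: Cons.IH br_left_letter BW_leibniz) simp
  finally show ?case by simp
qed

lemma br_eq: "br = BB RR"
proof (intro ext)
  fix p q
  show "br p q = BB RR p q" by (subst br_expand) (simp only: BB_def br_words)
qed

lemma RR_CYBE: "CYBE RR"
  unfolding CYBE_def
proof (intro allI impI)
  fix X :: "('b, 'k) tv" assume hX: "homog 3 X"
  have c0: "CYx RR (sg [a, b, c] 1) = 0" for a b c
  proof -
    have h1: "homog 1 (sg [d] (1::'k))" for d by (simp add: homog_single)
    have "br (sg [a] 1) (br (sg [b] 1) (sg [c] 1)) + perm231 1 1 1 (br (sg [b] 1) (br (sg [c] 1) (sg [a] 1)))
        + perm312 1 1 1 (br (sg [c] 1) (br (sg [a] 1) (sg [b] 1))) = 0"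
      by (rule br_jacobi[OF h1 h1 h1])
    moreover have "JacW [a] [b] [c] = br (sg [a] 1) (br (sg [b] 1) (sg [c] 1)) + perm231 1 1 1 (br (sg [b] 1) (br (sg [c] 1) (sg [a] 1)))
        + perm312 1 1 1 (br (sg [c] 1) (br (sg [a] 1) (sg [b] 1)))"
      unfolding JacW_def by (simp add: br_eq[symmetric] br_words[symmetric])
    ultimately have "JacW [a] [b] [c] = 0" by simp
    then have "lin (\<lambda>t. sg ([a][0 := t!0] @ [b][0 := t!1] @ [c][0 := t!2]) 1) (CYx RR (sg [a, b, c] 1)) = 0"
      unfolding word_jacobi_expr by simp
    then have "lin (\<lambda>t. sg [t!0, t!1, t!2] 1) (CYx RR (sg [a, b, c] 1)) = 0"
      by simp
    then show ?thesis
      using lin_homog3[OF homog_CYx, of "\<lambda>t. sg t 1"] by (simp add: lin_single_id)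
  qed
  have "CYx RR X = lin (\<lambda>w. CYx RR (sg w 1)) X"
    by (subst (1) lin_single_id[symmetric]) (rule linear_tv_lin[OF linear_CYx])
  also have "\<dots> = 0"
  proof (rule lin_zero_fun)
    fix w assume "w \<in> ks X"
    then have "w = [w!0, w!1, w!2]" using hX homog_keys len3 by blast
    then show "CYx RR (sg w 1) = 0" using c0 by metis
  qed
  finally show "commut (r12 RR) (r13 RR) X - commut (r23 RR) (r12 RR) X + commut (r13 RR) (r23 RR) X = 0"
    by (simp add: CYx_def)
qed

end

theorem theorem1p1:
  fixes dummy :: "'b itself" and dummyk :: "'k::field_char_0 itself"
  shows "bij_betw (assoc_r :: (('b, 'k) tv \<Rightarrow> ('b, 'k) tv \<Rightarrow> ('b, 'k) tv) \<Rightarrow> _)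
           {br. twisted_poisson br}
           {R. R \<in> EndVV \<and> skew_r R \<and> CYBE R}"
  unfolding bij_betw_def
proof (intro conjI)
  show "inj_on (assoc_r :: (('b, 'k) tv \<Rightarrow> ('b, 'k) tv \<Rightarrow> ('b, 'k) tv) \<Rightarrow> _) {br. twisted_poisson br}"
  proof (rule inj_onI)
    fix br1 br2 :: "('b, 'k) tv \<Rightarrow> ('b, 'k) tv \<Rightarrow> ('b, 'k) tv"
    assume t1: "br1 \<in> {br. twisted_poisson br}" and t2: "br2 \<in> {br. twisted_poisson br}"
      and eq: "assoc_r br1 = assoc_r br2"
    have "br1 = BB (assoc_r br1)" using tpb.br_eq[of br1] t1 by (simp add: tpb_def)
    also have "\<dots> = BB (assoc_r br2)" by (simp add: eq)
    also have "\<dots> = br2" using tpb.br_eq[of br2] t2 by (simp add: tpb_def)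
    finally show "br1 = br2" .
  qed
  show "(assoc_r :: (('b, 'k) tv \<Rightarrow> ('b, 'k) tv \<Rightarrow> ('b, 'k) tv) \<Rightarrow> _) ` {br. twisted_poisson br} = {R. R \<in> EndVV \<and> skew_r R \<and> CYBE R}"
  proof (intro equalityI subsetI)
    fix R assume "R \<in> (assoc_r :: (('b, 'k) tv \<Rightarrow> ('b, 'k) tv \<Rightarrow> ('b, 'k) tv) \<Rightarrow> _) ` {br. twisted_poisson br}"
    then obtain br :: "('b, 'k) tv \<Rightarrow> ('b, 'k) tv \<Rightarrow> ('b, 'k) tv" where t: "twisted_poisson br" and R: "R = assoc_r br" by auto
    interpret tpb br using t by (simp add: tpb_def)
    show "R \<in> {R. R \<in> EndVV \<and> skew_r R \<and> CYBE R}"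
      using RR_End RR_skew RR_CYBE R by simp
  next
    fix R :: "('b, 'k) tv \<Rightarrow> ('b, 'k) tv" assume "R \<in> {R. R \<in> EndVV \<and> skew_r R \<and> CYBE R}"
    then have E: "R \<in> EndVV" and S: "skew_r R" and C: "CYBE R" by auto
    interpret rskew R using E S by (simp add: rskew_def rmat_def rskew_axioms_def)
    have "twisted_poisson (BB R)" by (rule BB_twisted[OF C])
    moreover have "assoc_r (BB R) = R" by (rule assoc_BB)
    ultimately show "R \<in> (assoc_r :: (('b, 'k) tv \<Rightarrow> ('b, 'k) tv \<Rightarrow> ('b, 'k) tv) \<Rightarrow> _) ` {br. twisted_poisson br}"
      by (metis (mono_tags, lifting) image_eqI mem_Collect_eq)
  qed
qed

end
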